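(* Let $n\ge 2$ and let $D$ be a division ring. Then the matrix ring ${\rm M}_n(D)$ is GWNC if, and only if, either $D\cong\mathbb{Z}_2$, or $D\cong\mathbb{Z}_3$ and $n=2$.
   Context: All rings are associative with identity. For a ring $S$, $U(S)$, ${\rm Nil}(S)$, ${\rm Id}(S)$ denote units, nilpotents, idempotents. $S$ is GWNC if every $a\in S\setminus U(S)$ can be written as $a=q+e$ or $a=q-e$ with $q\in{\rm Nil}(S)$, $e\in{\rm Id}(S)$. *)

theory Defs
  imports "Jordan_Normal_Form.Matrix" "HOL-Algebra.Ring" "HOL-Library.Numeral_Type"
begin

definition nilpotents :: "('a, 'b) ring_scheme \<Rightarrow> 'a set" where
  "nilpotents R = {q \<in> carrier R. \<exists>k::nat. q [^]\<^bsub>R\<^esub> k = \<zero>\<^bsub>R\<^esub>}"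

definition idempotents :: "('a, 'b) ring_scheme \<Rightarrow> 'a set" where
  "idempotents R = {e \<in> carrier R. e \<otimes>\<^bsub>R\<^esub> e = e}"

definition GWNC :: "('a, 'b) ring_scheme \<Rightarrow> bool" where
  "GWNC R \<longleftrightarrow> (\<forall>a \<in> carrier R - Units R. \<exists>q \<in> nilpotents R. \<exists>e \<in> idempotents R.
      a = q \<oplus>\<^bsub>R\<^esub> e \<or> a = q \<ominus>\<^bsub>R\<^esub> e)"

definition ring_iso_ty :: "('a::ring_1 \<Rightarrow> 'b::ring_1) \<Rightarrow> bool" where
  "ring_iso_ty f \<longleftrightarrow> bij f \<and> f 1 = 1 \<and>
     (\<forall>x y. f (x + y) = f x + f y) \<and> (\<forall>x y. f (x * y) = f x * f y)"

end

theory Submission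
  imports Defs
begin

lemma ring_mat_a_inv:
  assumes "A \<in> carrier_mat n n"
  shows "a_inv (ring_mat TYPE('a::ring_1) n b) A = - A"
proof -
  let ?P = "\<lambda>y. y \<in> carrier (add_monoid (ring_mat TYPE('a) n b)) \<and>
      A \<otimes>\<^bsub>add_monoid (ring_mat TYPE('a) n b)\<^esub> y = \<one>\<^bsub>add_monoid (ring_mat TYPE('a) n b)\<^esub> \<and>
      y \<otimes>\<^bsub>add_monoid (ring_mat TYPE('a) n b)\<^esub> A = \<one>\<^bsub>add_monoid (ring_mat TYPE('a) n b)\<^esub>"
  have P: "?P (- A)" using assms by (auto simp: ring_mat_simps)
  have Q: "y = - A" if "?P y" for y
  proof -
    from that have y: "y \<in> carrier_mat n n" and e: "A + y = 0\<^sub>m n n" by (auto simp: ring_mat_simps)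
    show "y = - A"
    proof (rule eq_matI)
      fix i j assume ij: "i < dim_row (- A)" "j < dim_col (- A)"
      have "(A + y) $$ (i,j) = 0" using e ij assms by simp
      thus "y $$ (i,j) = (- A) $$ (i,j)" using ij assms y by (simp add: add_eq_0_iff)
    qed (insert y assms, auto)
  qed
  have "m_inv (add_monoid (ring_mat TYPE('a) n b)) A = - A"
    unfolding m_inv_def by (rule the_equality, rule P, erule Q)
  thus ?thesis by (simp add: a_inv_def)
qed

lemma ring_mat_a_minus:
  assumes "A \<in> carrier_mat n n" "B \<in> carrier_mat n n"
  shows "a_minus (ring_mat TYPE('a::ring_1) n b) A B = A - B"
  unfolding a_minus_def ring_mat_a_inv[OF assms(2)]
  by (rule eq_matI, insert assms, auto simp: ring_mat_simps)

definition nilp :: "nat \<Rightarrow> 'a::semiring_1 mat \<Rightarrow> bool" where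
  "nilp n N \<longleftrightarrow> (\<exists>k. N ^\<^sub>m k = 0\<^sub>m n n)"

definition unitm :: "nat \<Rightarrow> 'a::semiring_1 mat \<Rightarrow> bool" where
  "unitm n A \<longleftrightarrow> (\<exists>B. B \<in> carrier_mat n n \<and> A * B = 1\<^sub>m n \<and> B * A = 1\<^sub>m n)"

lemma GWNC_iff:
  "GWNC (ring_mat TYPE('a::ring_1) n ()) \<longleftrightarrow>
   (\<forall>A \<in> carrier_mat n n. \<not> unitm n (A :: 'a mat) \<longrightarrow>
     (\<exists>q e. q \<in> carrier_mat n n \<and> e \<in> carrier_mat n n \<and> nilp n q \<and> e * e = e \<and> (A = q + e \<or> A = q - e)))"
proof -
  let ?R = "ring_mat TYPE('a) n ()"
  have U: "A \<in> Units ?R \<longleftrightarrow> A \<in> carrier_mat n n \<and> unitm n A" for A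
    unfolding Units_def unitm_def by (auto simp: ring_mat_simps)
  have N: "q \<in> nilpotents ?R \<longleftrightarrow> q \<in> carrier_mat n n \<and> nilp n q" for q
    unfolding nilpotents_def nilp_def
    by (auto simp: ring_mat_simps pow_mat_ring_pow[symmetric])
  have I: "e \<in> idempotents ?R \<longleftrightarrow> e \<in> carrier_mat n n \<and> e * e = e" for e
    unfolding idempotents_def by (auto simp: ring_mat_simps)
  show ?thesis
  proof
    assume H0: "GWNC ?R"
    show "\<forall>A \<in> carrier_mat n n. \<not> unitm n (A::'a mat) \<longrightarrow>
     (\<exists>q e. q \<in> carrier_mat n n \<and> e \<in> carrier_mat n n \<and> nilp n q \<and> e * e = e \<and> (A = q + e \<or> A = q - e))"
    proof (intro ballI impI)

      fix A :: "'a mat"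
      assume A: "A \<in> carrier_mat n n" and nu: "\<not> unitm n A"
      hence "A \<in> carrier ?R - Units ?R" using U by (auto simp: ring_mat_simps)
      with H0[unfolded GWNC_def] obtain q e where q: "q \<in> nilpotents ?R" and e: "e \<in> idempotents ?R"
        and eq: "A = q \<oplus>\<^bsub>?R\<^esub> e \<or> A = q \<ominus>\<^bsub>?R\<^esub> e" by blast
      from q e have qc: "q \<in> carrier_mat n n" "nilp n q" and ec: "e \<in> carrier_mat n n" "e * e = e"
        using N I by auto
      have m1: "q \<ominus>\<^bsub>?R\<^esub> e = q - e" by (rule ring_mat_a_minus[OF qc(1) ec(1)])
      have m2: "q \<oplus>\<^bsub>?R\<^esub> e = q + e" by (simp add: ring_mat_simps)
      from eq have "A = q + e \<or> A = q - e" unfolding m1 m2 .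
      then have "\<exists>q e. q \<in> carrier_mat n n \<and> e \<in> carrier_mat n n \<and> nilp n q \<and> e * e = e \<and> (A = q + e \<or> A = q - e)"
        using qc ec by blast
      then show "\<exists>q e. q \<in> carrier_mat n n \<and> e \<in> carrier_mat n n \<and> nilp n q \<and> e * e = e \<and> (A = q + e \<or> A = q - e)"
        by simp
    qed
  next
    assume H: "\<forall>A\<in>carrier_mat n n. \<not> unitm n (A::'a mat) \<longrightarrow>
     (\<exists>q e. q \<in> carrier_mat n n \<and> e \<in> carrier_mat n n \<and> nilp n q \<and> e * e = e \<and> (A = q + e \<or> A = q - e))"
    show "GWNC ?R" unfolding GWNC_def
    proof (intro ballI)
      fix A :: "'a mat"
      assume A: "A \<in> carrier ?R - Units ?R"
      hence Ac: "A \<in> carrier_mat n n" and nu: "\<not> unitm n A" using U by (auto simp: ring_mat_simps)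
      with H obtain q e where qc: "q \<in> carrier_mat n n" "nilp n q" and ec: "e \<in> carrier_mat n n" "e * e = e"
        and eq: "A = q + e \<or> A = q - e" by blast
      have "q \<in> nilpotents ?R" "e \<in> idempotents ?R" using qc ec N I by auto
      moreover
      have m1: "q \<ominus>\<^bsub>?R\<^esub> e = q - e" by (rule ring_mat_a_minus[OF qc(1) ec(1)])
      have m2: "q \<oplus>\<^bsub>?R\<^esub> e = q + e" by (simp add: ring_mat_simps)
      have "A = q \<oplus>\<^bsub>?R\<^esub> e \<or> A = q \<ominus>\<^bsub>?R\<^esub> e"
        unfolding m1 m2 by (rule eq)
      ultimately show "\<exists>q\<in>nilpotents ?R. \<exists>e\<in>idempotents ?R. A = q \<oplus>\<^bsub>?R\<^esub> e \<or> A = q \<ominus>\<^bsub>?R\<^esub> e"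
        by blast
    qed
  qed
qed

lemma ex2: "(x::2) = 0 \<or> x = 1"
proof (induct x)
  case (of_int z)
  hence "z = 0 \<or> z = 1" by auto
  thus ?case by auto
qed

lemma ex3: "(x::3) = 0 \<or> x = 1 \<or> x = -1"
proof (induct x)
  case (of_int z)
  hence "z = 0 \<or> z = 1 \<or> z = 2" by auto
  moreover have "(of_int 2 :: 3) = -1" by simp
  ultimately show ?case by auto
qed

lemma iso_add0:
  fixes f :: "'a::ring_1 \<Rightarrow> 'b::ring_1"
  assumes "ring_iso_ty f" shows "f 0 = 0" and "f (- x) = - f x"
proof -
  have a: "\<And>x y. f (x + y) = f x + f y" using assms unfolding ring_iso_ty_def by auto
  have "f 0 = f 0 + f 0" using a[of 0 0] by simp
  thus "f 0 = 0" by simp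
  hence "f x + f (- x) = 0" using a[of x "- x"] by simp
  thus "f (- x) = - f x" by (simp add: add_eq_0_iff)
qed

lemma iso2_facts:
  fixes f :: "'a::ring_1 \<Rightarrow> 2"
  assumes f: "ring_iso_ty f"
  shows "\<forall>x::'a. x = 0 \<or> x = 1" and "(1::'a) + 1 = 0"
proof -
  have inj: "inj f" and f1: "f 1 = 1" and a: "\<And>x y. f (x + y) = f x + f y"
    using f unfolding ring_iso_ty_def bij_def by auto
  have f0: "f 0 = 0" by (rule iso_add0[OF f])
  show "\<forall>x::'a. x = 0 \<or> x = 1"
  proof
    fix x :: 'a
    from ex2[of "f x"] show "x = 0 \<or> x = 1"
      using inj f0 f1 by (metis injD)
  qed
  have "f (1 + 1) = f 0" using a[of 1 1] f1 f0 by simp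
  thus "(1::'a) + 1 = 0" using inj by (metis injD)
qed

lemma iso3_facts:
  fixes f :: "'a::ring_1 \<Rightarrow> 3"
  assumes f: "ring_iso_ty f"
  shows "\<forall>x::'a. x = 0 \<or> x = 1 \<or> x = -1" and "(1::'a) \<noteq> -1"
proof -
  have inj: "inj f" and f1: "f 1 = 1" and a: "\<And>x y. f (x + y) = f x + f y"
    using f unfolding ring_iso_ty_def bij_def by auto
  have f0: "f 0 = 0" by (rule iso_add0[OF f])
  have fm: "f (-1) = -1" using iso_add0(2)[OF f, of 1] f1 by simp
  show "\<forall>x::'a. x = 0 \<or> x = 1 \<or> x = -1"
  proof
    fix x :: 'a
    from ex3[of "f x"] show "x = 0 \<or> x = 1 \<or> x = -1"
      using inj f0 f1 fm by (metis injD)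
  qed
  show "(1::'a) \<noteq> -1"
  proof
    assume "(1::'a) = -1"
    hence "f 1 = f (-1)" by simp
    thus False using f1 fm by simp
  qed
qed

lemma mk_iso2:
  assumes H: "\<forall>x::'a::division_ring. x = 0 \<or> x = 1" and c: "(1::'a) + 1 = 0"
  shows "\<exists>f::'a \<Rightarrow> 2. ring_iso_ty f"
proof -
  define f :: "'a \<Rightarrow> 2" where "f = (\<lambda>x. if x = 0 then 0 else 1)"
  have "bij f"
  proof (rule bijI)
    show "inj f" unfolding f_def inj_def using H by auto
    show "surj f"
    proof -
      have "y \<in> range f" for y :: 2
        using ex2[of y] unfolding f_def
        by (metis (mono_tags, lifting) rangeI zero_neq_one)
      thus ?thesis by auto
    qed
  qed
  moreover have "f 1 = 1" unfolding f_def by simp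
  moreover have "\<forall>x y. f (x + y) = f x + f y"
  proof (intro allI)
    fix x y :: 'a
    show "f (x + y) = f x + f y"
      using H[rule_format, of x] H[rule_format, of y] c unfolding f_def by auto
  qed
  moreover have "\<forall>x y. f (x * y) = f x * f y"
  proof (intro allI)
    fix x y :: 'a
    show "f (x * y) = f x * f y"
      using H[rule_format, of x] H[rule_format, of y] unfolding f_def by auto
  qed
  ultimately show ?thesis unfolding ring_iso_ty_def by blast
qed

lemma mk_iso3:
  assumes H: "\<forall>x::'a::division_ring. x = 0 \<or> x = 1 \<or> x = -1" and c: "(1::'a) \<noteq> -1"
  shows "\<exists>f::'a \<Rightarrow> 3. ring_iso_ty f"
proof -
  have c2: "(1::'a) + 1 = -1"
  proof -
    have "(1::'a) + 1 \<noteq> 0" using c by (metis add_eq_0_iff)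
    moreover have "(1::'a) + 1 \<noteq> 1"
    proof
      assume "(1::'a) + 1 = 1"
      hence "(1::'a) = 0" by (metis add_cancel_left_right)
      thus False by simp
    qed
    ultimately show ?thesis using H by blast
  qed
  have c3: "(-1::'a) + -1 = 1" using c2 by (metis minus_add_distrib minus_minus)
  have m0: "(-1::'a) \<noteq> 0" by simp
  define f :: "'a \<Rightarrow> 3" where "f = (\<lambda>x. if x = 0 then 0 else if x = 1 then 1 else -1)"
  have "bij f"
  proof (rule bijI)
    show "inj f" unfolding f_def inj_def using H c by auto
    show "surj f"
    proof -
      have "y \<in> range f" for y :: 3
      proof -
        have "f 0 = 0" "f 1 = 1" "f (-1) = -1" unfolding f_def using c m0 by auto
        thus ?thesis using ex3[of y] by (metis rangeI)
      qed
      thus ?thesis by auto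
    qed
  qed
  moreover have "f 1 = 1" unfolding f_def by simp
  moreover have "\<forall>x y. f (x + y) = f x + f y"
  proof (intro allI)
    fix x y :: 'a
    show "f (x + y) = f x + f y"
    proof -
      have c2': "(2::'a) = -1" using c2 by simp
      have c3': "(-2::'a) = 1" using c3 by simp
      show ?thesis
        using H[rule_format, of x] H[rule_format, of y] c m0 unfolding f_def
        by (elim disjE) (simp_all add: c2' c3')
    qed
  qed
  moreover have "\<forall>x y. f (x * y) = f x * f y"
  proof (intro allI)
    fix x y :: 'a
    show "f (x * y) = f x * f y"
      using H[rule_format, of x] H[rule_format, of y] c m0 unfolding f_def by auto
  qed
  ultimately show ?thesis unfolding ring_iso_ty_def by blast
qed

lemma mult2_entry:
  assumes "A \<in> carrier_mat 2 2" "B \<in> carrier_mat 2 2" "i < 2" "j < 2"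
  shows "(A * B) $$ (i,j) = A $$ (i,0) * B $$ (0,j) + A $$ (i,1) * B $$ (1,j)"
  using assms by (simp add: scalar_prod_def numeral_2_eq_2)

lemma smult0_mat: "A \<in> carrier_mat n m \<Longrightarrow> (0::'a::ring_1) \<cdot>\<^sub>m A = 0\<^sub>m n m"
  by (rule eq_matI) auto
lemma smult1_mat: "(1::'a::ring_1) \<cdot>\<^sub>m A = A"
  by (rule eq_matI) auto
lemma smultm1_mat: "(-1::'a::ring_1) \<cdot>\<^sub>m A = - A"
  by (rule eq_matI) auto

lemma F3_comm:
  assumes H: "\<forall>x::'a::ring_1. x = 0 \<or> x = 1 \<or> x = -1"
  shows "(x::'a) * y = y * x"
  using H[rule_format, of x] by auto

lemma F3_n2:
  assumes H: "\<forall>x::'a::division_ring. x = 0 \<or> x = 1 \<or> x = -1" and c: "(1::'a) \<noteq> -1"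
  shows "GWNC (ring_mat TYPE('a) 2 ())"
  unfolding GWNC_iff
proof (intro ballI impI)
  fix A :: "'a mat"
  assume A: "A \<in> carrier_mat 2 2" and nu: "\<not> unitm 2 A"
  have cm: "\<And>x y::'a. x * y = y * x" using F3_comm[OF H] by blast
  have lcm: "\<And>x y z::'a. x * (y * z) = y * (x * z)" by (metis cm mult.assoc)
  define a where "a = A $$ (0,0)"
  define b where "b = A $$ (0,1)"
  define cc where "cc = A $$ (1,0)"
  define d where "d = A $$ (1,1)"
  have hA: "A $$ (0,0) = a" "A $$ (0,Suc 0) = b" "A $$ (Suc 0,0) = cc" "A $$ (Suc 0,Suc 0) = d"
    unfolding a_def b_def cc_def d_def by auto
  have det0: "a * d - b * cc = 0"
  proof (rule ccontr)
    assume nz: "a * d - b * cc \<noteq> 0"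
    define t where "t = inverse (a * d - b * cc)"
    have t1: "(a * d - b * cc) * t = 1" unfolding t_def using nz by simp
    define B :: "'a mat" where "B = mat 2 2 (\<lambda>(i,j). if i = 0 \<and> j = 0 then d * t else
        if i = 0 then - b * t else if j = 0 then - cc * t else a * t)"
    have Bc: "B \<in> carrier_mat 2 2" unfolding B_def by simp
    have B00: "B $$ (0,0) = d * t" and B01: "B $$ (0,1) = - b * t"
      and B10: "B $$ (1,0) = - cc * t" and B11: "B $$ (1,1) = a * t" unfolding B_def by auto
    have hB: "B $$ (0,0) = d * t" "B $$ (0,Suc 0) = - b * t"
      "B $$ (Suc 0,0) = - cc * t" "B $$ (Suc 0,Suc 0) = a * t" unfolding B_def by auto
    have cmt: "\<And>x. t * x = x * t" by (rule cm)
    have "A * B = 1\<^sub>m 2"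
    proof (rule eq_matI)
      fix i j assume ij: "i < dim_row (1\<^sub>m 2 :: 'a mat)" "j < dim_col (1\<^sub>m 2 :: 'a mat)"
      hence ij: "i < 2" "j < 2" by auto
      have i: "i = 0 \<or> i = 1" and j: "j = 0 \<or> j = 1" using ij by auto
      show "(A * B) $$ (i, j) = 1\<^sub>m 2 $$ (i, j)"
        unfolding mult2_entry[OF A Bc ij]
        using i j t1 by (auto simp: hA hB ring_distribs mult.assoc cm lcm)
    qed (insert A Bc, auto)
    moreover have "B * A = 1\<^sub>m 2"
    proof (rule eq_matI)
      fix i j assume ij: "i < dim_row (1\<^sub>m 2 :: 'a mat)" "j < dim_col (1\<^sub>m 2 :: 'a mat)"
      hence ij: "i < 2" "j < 2" by auto
      have i: "i = 0 \<or> i = 1" and j: "j = 0 \<or> j = 1" using ij by auto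
      show "(B * A) $$ (i, j) = 1\<^sub>m 2 $$ (i, j)"
        unfolding mult2_entry[OF Bc A ij]
        using i j t1 by (auto simp: hA hB ring_distribs mult.assoc cm lcm)
    qed (insert A Bc, auto)
    ultimately show False using nu Bc unfolding unitm_def by blast
  qed
  define tr where "tr = a + d"
  have hA: "A $$ (0,0) = a" "A $$ (0,Suc 0) = b" "A $$ (Suc 0,0) = cc" "A $$ (Suc 0,Suc 0) = d"
    unfolding a_def b_def cc_def d_def by auto
  have sq: "A * A = tr \<cdot>\<^sub>m A"
  proof (rule eq_matI)
    fix i j assume ij: "i < dim_row (tr \<cdot>\<^sub>m A)" "j < dim_col (tr \<cdot>\<^sub>m A)"
    hence ij: "i < 2" "j < 2" using A by auto
    have i: "i = 0 \<or> i = 1" and j: "j = 0 \<or> j = 1" using ij by auto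
    have e: "b * cc = a * d" using det0 by simp
    show "(A * A) $$ (i, j) = (tr \<cdot>\<^sub>m A) $$ (i, j)"
      unfolding mult2_entry[OF A A ij]
      using i j A e unfolding tr_def by (auto simp: hA ring_distribs mult.assoc cm lcm)
  qed (insert A, auto)
  let ?G = "\<exists>q e. q \<in> carrier_mat 2 2 \<and> e \<in> carrier_mat 2 2 \<and> nilp 2 q \<and> e * e = e \<and> (A = q + e \<or> A = q - e)"
  have z0: "nilp 2 (0\<^sub>m 2 2 :: 'a mat)" unfolding nilp_def
    by (rule exI[of _ 1], simp)
  have "tr = 0 \<or> tr = 1 \<or> tr = -1" using H by blast
  moreover
  { assume "tr = 0"
    hence AA: "A * A = 0\<^sub>m 2 2" using sq A by (simp add: smult0_mat)
    have "A ^\<^sub>m 2 = A * A" using A by (simp add: numeral_2_eq_2)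
    hence "nilp 2 A" unfolding nilp_def using AA by metis
    moreover have "A = A + 0\<^sub>m 2 2" using A by simp
    moreover have "0\<^sub>m 2 2 * 0\<^sub>m 2 2 = (0\<^sub>m 2 2 :: 'a mat)" by simp
    ultimately have ?G using A z0
      by (intro exI[of _ A] exI[of _ "0\<^sub>m 2 2"]) simp }
  moreover
  { assume "tr = 1"
    hence "A * A = A" using sq A by (simp add: smult1_mat)
    moreover have "A = 0\<^sub>m 2 2 + A" using A by simp
    ultimately have ?G using A z0
      by (intro exI[of _ "0\<^sub>m 2 2"] exI[of _ A]) simp }
  moreover
  { assume "tr = -1"
    hence "A * A = - A" using sq A by (simp add: smultm1_mat)
    moreover have "(- A) * (- A) = A * A" using carrier_matD[OF A] by simp
    ultimately have "(- A) * (- A) = - A" by simp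
    moreover have "A = 0\<^sub>m 2 2 - (- A)" by (rule eq_matI, insert A, auto)
    moreover have "- A \<in> carrier_mat 2 2" using A by simp
    ultimately have ?G using A z0
      by (intro exI[of _ "0\<^sub>m 2 2"] exI[of _ "- A"]) simp }
  ultimately show "\<exists>q e. q \<in> carrier_mat 2 2 \<and> e \<in> carrier_mat 2 2 \<and> nilp 2 q \<and> e * e = e \<and> (A = q + e \<or> A = q - e)"
    by blast
qed

lemma index_unit_vec'[simp]:
  "j < n \<Longrightarrow> unit_vec n i $ j = (if j = i then 1 else 0)"
  unfolding unit_vec_def by auto

lemma mult_sq_carrier[simp]:
  "A \<in> carrier_mat n n \<Longrightarrow> B \<in> carrier_mat n n \<Longrightarrow> A * B \<in> carrier_mat n n"
  by (rule mult_carrier_mat)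

lemma mv_zero[simp]:
  "(M :: 'a::semiring_0 mat) \<in> carrier_mat n m \<Longrightarrow> M *\<^sub>v 0\<^sub>v m = 0\<^sub>v n"
  by (intro eq_vecI, auto simp: scalar_prod_def)

lemma zero_mv[simp]:
  "v \<in> carrier_vec m \<Longrightarrow> (0\<^sub>m n m :: 'a::semiring_0 mat) *\<^sub>v v = 0\<^sub>v n"
  by (intro eq_vecI, auto simp: scalar_prod_def)

lemma mv_unit:
  assumes "(M :: 'a::semiring_1 mat) \<in> carrier_mat n m" "j < m" "i < n"
  shows "(M *\<^sub>v unit_vec m j) $ i = M $$ (i,j)"
proof -
  have "(M *\<^sub>v unit_vec m j) $ i = row M i \<bullet> unit_vec m j" using assms by simp
  also have "\<dots> = row M i $ j" using assms by (simp add: scalar_prod_right_unit)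
  finally show ?thesis using assms by simp
qed

lemma mv_lin:
  assumes M: "(M :: 'a::ring_1 mat) \<in> carrier_mat n m" and x: "x \<in> carrier_vec m" and y: "y \<in> carrier_vec m"
    and i: "i < n"
  shows "(M *\<^sub>v vec m (\<lambda>l. x $ l * a + y $ l * b)) $ i = (M *\<^sub>v x) $ i * a + (M *\<^sub>v y) $ i * b"
proof -
  have "(M *\<^sub>v vec m (\<lambda>l. x $ l * a + y $ l * b)) $ i = (\<Sum>l<m. M $$ (i,l) * (x $ l * a + y $ l * b))"
    using M i by (simp add: scalar_prod_def lessThan_atLeast0)
  also have "\<dots> = (\<Sum>l<m. M $$ (i,l) * x $ l) * a + (\<Sum>l<m. M $$ (i,l) * y $ l) * b"
    by (simp add: sum.distrib sum_distrib_right distrib_left mult.assoc)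
  also have "\<dots> = (M *\<^sub>v x) $ i * a + (M *\<^sub>v y) $ i * b"
    using M x y i by (simp add: scalar_prod_def lessThan_atLeast0)
  finally show ?thesis .
qed

lemma powv:
  assumes q: "(q :: 'a::semiring_1 mat) \<in> carrier_mat n n"
  shows "v \<in> carrier_vec n \<Longrightarrow> q ^\<^sub>m k *\<^sub>v v = ((\<lambda>x. q *\<^sub>v x) ^^ k) v"
proof (induct k arbitrary: v)
  case 0
  thus ?case using q by simp
next
  case (Suc k)
  have "q ^\<^sub>m Suc k *\<^sub>v v = (q ^\<^sub>m k * q) *\<^sub>v v" by simp
  also have "\<dots> = q ^\<^sub>m k *\<^sub>v (q *\<^sub>v v)"
    by (rule assoc_mult_mat_vec[of _ n n _ n], insert q Suc(2), auto)
  also have "\<dots> = ((\<lambda>x. q *\<^sub>v x) ^^ k) (q *\<^sub>v v)"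
    using Suc(1)[of "q *\<^sub>v v"] q Suc(2) by simp
  also have "\<dots> = ((\<lambda>x. q *\<^sub>v x) ^^ Suc k) v" by (simp only: funpow_Suc_right comp_def)
  finally show ?case .
qed

lemma nilp_vec:
  assumes q: "(q :: 'a::semiring_1 mat) \<in> carrier_mat n n" and N: "nilp n q" and v: "v \<in> carrier_vec n"
  shows "\<exists>K. ((\<lambda>x. q *\<^sub>v x) ^^ K) v = 0\<^sub>v n"
proof -
  obtain K where K: "q ^\<^sub>m K = 0\<^sub>m n n" using N unfolding nilp_def by blast
  have "((\<lambda>x. q *\<^sub>v x) ^^ K) v = q ^\<^sub>m K *\<^sub>v v" using powv[OF q v] by simp
  also have "\<dots> = 0\<^sub>v n" unfolding K by (rule eq_vecI, insert v, auto)
  finally show ?thesis by blast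
qed

lemma funpow_carrier:
  assumes q: "q \<in> carrier_mat n n" and v: "v \<in> carrier_vec n"
  shows "((\<lambda>x. q *\<^sub>v x) ^^ k) v \<in> carrier_vec n"
  by (induct k, insert q v, auto)

lemma notGWNC_scalar:
  fixes a :: "'a::division_ring"
  assumes n: "n \<ge> 2" and a0: "a \<noteq> 0" and a1: "a \<noteq> 1" and am: "a \<noteq> -1"
  shows "\<not> GWNC (ring_mat TYPE('a) n ())"
proof
  assume G: "GWNC (ring_mat TYPE('a) n ())"
  define A where "A = mat n n (\<lambda>(i,j). if i = 0 \<and> j = 0 then a else (0::'a))"
  have Ac: "A \<in> carrier_mat n n" unfolding A_def by simp
  have nu: "\<not> unitm n A"
  proof
    assume "unitm n A"
    then obtain B where Bc: "B \<in> carrier_mat n n" and AB: "A * B = 1\<^sub>m n" unfolding unitm_def by blast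
    have "(A * B) $$ (1,1) = 0" using Bc n unfolding A_def by (simp add: scalar_prod_def)
    moreover have "(1\<^sub>m n :: 'a mat) $$ (1,1) = 1" using n by simp
    ultimately show False using AB by simp
  qed
  obtain q e where qc: "q \<in> carrier_mat n n" and ec: "e \<in> carrier_mat n n" and nq: "nilp n q"
    and ee: "e * e = e" and eq: "A = q + e \<or> A = q - e"
    using G Ac nu unfolding GWNC_iff by blast
  obtain \<sigma> :: 'a where sig: "\<sigma> = 1 \<or> \<sigma> = -1"
    and qx: "\<And>(x::'a vec) i. x \<in> carrier_vec n \<Longrightarrow> i < n \<Longrightarrow> (q *\<^sub>v x) $ i = (A *\<^sub>v x) $ i + \<sigma> * (e *\<^sub>v x) $ i"
  proof (cases "A = q + e")
    case True
    hence qe: "q = A - e" by (intro eq_matI, insert qc ec Ac, auto)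
    show ?thesis
    proof (rule that[of "-1"])
      fix x :: "'a vec" and i assume x: "x \<in> carrier_vec n" and i: "i < n"
      have "q *\<^sub>v x = A *\<^sub>v x - e *\<^sub>v x" unfolding qe
        by (rule minus_mult_distrib_mat_vec[OF Ac ec x])
      thus "(q *\<^sub>v x) $ i = (A *\<^sub>v x) $ i + -1 * (e *\<^sub>v x) $ i" using i Ac ec by simp
    qed simp
  next
    case False
    hence "A = q - e" using eq by simp
    hence qe: "q = A + e" by (intro eq_matI, insert qc ec Ac, auto)
    show ?thesis
    proof (rule that[of "1"])
      fix x :: "'a vec" and i assume x: "x \<in> carrier_vec n" and i: "i < n"
      have "q *\<^sub>v x = A *\<^sub>v x + e *\<^sub>v x" unfolding qe
        by (rule add_mult_distrib_mat_vec[OF Ac ec x])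
      thus "(q *\<^sub>v x) $ i = (A *\<^sub>v x) $ i + 1 * (e *\<^sub>v x) $ i" using i Ac ec by simp
    qed simp
  qed
  have sigc: "\<And>x. \<sigma> * x = x * \<sigma>" using sig by auto
  have sig0: "\<sigma> \<noteq> 0" using sig by auto
  define u0 :: "'a vec" where "u0 = unit_vec n 0"
  define u where "u = e *\<^sub>v u0"
  define u1 where "u1 = u $ 0"
  have u0c: "u0 \<in> carrier_vec n" unfolding u0_def by simp
  have uc: "u \<in> carrier_vec n" unfolding u_def using ec u0c by simp
  have eu: "e *\<^sub>v u = u"
  proof -
    have "e *\<^sub>v u = (e * e) *\<^sub>v u0" unfolding u_def using ec u0c by simp
    thus ?thesis unfolding ee u_def .
  qed
  define cmb where "cmb = (\<lambda>\<alpha> \<beta>. vec n (\<lambda>l. u0 $ l * \<alpha> + u $ l * \<beta>))"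
  have cmbc: "cmb \<alpha> \<beta> \<in> carrier_vec n" for \<alpha> \<beta> unfolding cmb_def by simp
  have cmb_i: "i < n \<Longrightarrow> cmb \<alpha> \<beta> $ i = (if i = 0 then \<alpha> else 0) + u $ i * \<beta>" for i \<alpha> \<beta>
    unfolding cmb_def u0_def by simp
  have Ax: "(A *\<^sub>v x) $ i = (if i = 0 then a * x $ 0 else 0)" if x: "x \<in> carrier_vec n" and i: "i < n" for x i
  proof -
    have "(A *\<^sub>v x) $ i = (\<Sum>l<n. A $$ (i,l) * x $ l)"
      using Ac x i by (simp add: scalar_prod_def lessThan_atLeast0)
    also have "\<dots> = (\<Sum>l<n. if l = 0 then (if i = 0 then a * x $ 0 else 0) else 0)"
      by (rule sum.cong, simp, insert i, auto simp: A_def)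
    also have "\<dots> = (if i = 0 then a * x $ 0 else 0)" using n by simp
    finally show ?thesis .
  qed
  have step: "q *\<^sub>v cmb \<alpha> \<beta> = cmb (a * (\<alpha> + u1 * \<beta>)) (\<sigma> * (\<alpha> + \<beta>))" for \<alpha> \<beta>
  proof (rule eq_vecI)
    fix i assume "i < dim_vec (cmb (a * (\<alpha> + u1 * \<beta>)) (\<sigma> * (\<alpha> + \<beta>)))"
    hence i: "i < n" unfolding cmb_def by simp
    have ex: "(e *\<^sub>v cmb \<alpha> \<beta>) $ i = u $ i * \<alpha> + u $ i * \<beta>"
      unfolding cmb_def mv_lin[OF ec u0c uc i] u_def[symmetric] eu by simp
    have x0: "cmb \<alpha> \<beta> $ 0 = \<alpha> + u1 * \<beta>" using cmb_i[of 0] n unfolding u1_def by simp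
    have "(q *\<^sub>v cmb \<alpha> \<beta>) $ i = (if i = 0 then a * (\<alpha> + u1 * \<beta>) else 0) + \<sigma> * (u $ i * \<alpha> + u $ i * \<beta>)"
      unfolding qx[OF cmbc i] Ax[OF cmbc i] ex x0 by simp
    also have "\<dots> = cmb (a * (\<alpha> + u1 * \<beta>)) (\<sigma> * (\<alpha> + \<beta>)) $ i"
      unfolding cmb_i[OF i] using sig by (auto simp: distrib_left)
    finally show "(q *\<^sub>v cmb \<alpha> \<beta>) $ i = cmb (a * (\<alpha> + u1 * \<beta>)) (\<sigma> * (\<alpha> + \<beta>)) $ i" .
  qed (insert qc, simp add: cmb_def)
  define st :: "nat \<Rightarrow> 'a \<times> 'a" where
    "st = (\<lambda>k. ((\<lambda>(\<alpha>,\<beta>). (a * (\<alpha> + u1 * \<beta>), \<sigma> * (\<alpha> + \<beta>))) ^^ k) (1, 0))"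
  have st0: "st 0 = (1, 0)" unfolding st_def by simp
  have stS: "st (Suc k) = (a * (fst (st k) + u1 * snd (st k)), \<sigma> * (fst (st k) + snd (st k)))" for k
    unfolding st_def by (simp add: case_prod_beta)
  have u0cmb: "u0 = cmb 1 0"
    by (rule eq_vecI, insert u0c, auto simp: cmb_def)
  have orb: "((\<lambda>x. q *\<^sub>v x) ^^ k) u0 = cmb (fst (st k)) (snd (st k))" for k
  proof (induct k)
    case 0 thus ?case using u0cmb st0 by simp
  next
    case (Suc k)
    thus ?case using step stS by simp
  qed
  obtain K where K: "((\<lambda>x. q *\<^sub>v x) ^^ K) u0 = 0\<^sub>v n" using nilp_vec[OF qc nq u0c] by blast
  hence KK: "cmb (fst (st K)) (snd (st K)) = 0\<^sub>v n" using orb by simp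
  have K0: "fst (st K) + u1 * snd (st K) = 0"
    using arg_cong[OF KK, of "\<lambda>v. v $ 0"] cmb_i[of 0] n unfolding u1_def by simp
  show False
  proof (cases "u1 = 1")
    case True
    have g: "fst (st k) + snd (st k) = (a + \<sigma>) ^ k" for k
    proof (induct k)
      case 0 thus ?case using st0 by simp
    next
      case (Suc k)
      have "fst (st (Suc k)) + snd (st (Suc k)) = (a + \<sigma>) * (fst (st k) + snd (st k))"
        unfolding stS using True by (simp add: distrib_right)
      thus ?case using Suc by (simp add: power_commutes)
    qed
    have "a + \<sigma> \<noteq> 0" using sig a1 am by (auto simp: add_eq_0_iff minus_equation_iff[of a])
    hence "(a + \<sigma>) ^ K \<noteq> 0" by simp
    thus False using g[of K] K0 True by simp
  next
    case False
    note u1n = False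
    show False
    proof (cases "\<exists>j. 0 < j \<and> j < n \<and> u $ j \<noteq> 0")
      case True
      then obtain j where j: "0 < j" "j < n" "u $ j \<noteq> 0" by blast
      have "u $ j * snd (st K) = 0"
        using arg_cong[OF KK, of "\<lambda>v. v $ j"] cmb_i[of j] j by simp
      hence b0: "snd (st K) = 0" using j by simp
      hence a0': "fst (st K) = 0" using K0 by simp
      have nz: "st k \<noteq> (0,0)" for k
      proof (induct k)
        case 0 thus ?case using st0 by simp
      next
        case (Suc k)
        show ?case
        proof
          assume z: "st (Suc k) = (0,0)"
          hence z1: "fst (st k) + u1 * snd (st k) = 0" using a0 unfolding stS by simp
          from z have z2: "fst (st k) + snd (st k) = 0" using sig0 unfolding stS by simp
          hence "fst (st k) = - snd (st k)" by (simp add: eq_neg_iff_add_eq_0)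
          hence "(u1 - 1) * snd (st k) = 0" using z1 by (simp add: algebra_simps)
          hence "snd (st k) = 0" using u1n by simp
          hence "st k = (0,0)" using z2 by (simp add: prod_eq_iff)
          thus False using Suc by simp
        qed
      qed
      thus False using b0 a0' nz[of K] by (simp add: prod_eq_iff)
    next
      case False
      hence uz: "\<And>j. 0 < j \<Longrightarrow> j < n \<Longrightarrow> u $ j = 0" by blast
      have "u1 = (e *\<^sub>v u) $ 0" using eu unfolding u1_def by simp
      also have "\<dots> = (\<Sum>l<n. e $$ (0,l) * u $ l)"
        using ec uc n by (simp add: scalar_prod_def lessThan_atLeast0)
      also have "\<dots> = (\<Sum>l<n. if l = 0 then e $$ (0,0) * u $ 0 else 0)"
        by (rule sum.cong, simp, insert uz, auto)
      also have "\<dots> = e $$ (0,0) * u $ 0" using n by simp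
      also have "e $$ (0,0) = u1" unfolding u1_def u_def u0_def using ec n by (simp add: mv_unit)
      finally have "u1 * u1 = u1" unfolding u1_def by simp
      hence "u1 * (u1 - 1) = 0" by (simp add: algebra_simps)
      hence u10: "u1 = 0" using u1n by simp
      have "fst (st k) = a ^ k" for k
      proof (induct k)
        case 0 thus ?case using st0 by simp
      next
        case (Suc k) thus ?case unfolding stS using u10 by (simp add: power_commutes)
      qed
      thus False using K0 u10 a0 by simp
    qed
  qed
qed

definition mtr :: "'a::comm_monoid_add mat \<Rightarrow> 'a" where
  "mtr A = (\<Sum>i<dim_row A. A $$ (i,i))"

lemma mat_eq_by_mv:
  assumes A: "(A :: 'a::semiring_1 mat) \<in> carrier_mat n m" and B: "B \<in> carrier_mat n m"
    and H: "\<And>j. j < m \<Longrightarrow> A *\<^sub>v unit_vec m j = B *\<^sub>v unit_vec m j"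
  shows "A = B"
proof (rule eq_matI)
  fix i j assume "i < dim_row B" "j < dim_col B"
  hence i: "i < n" and j: "j < m" using B by auto
  have "A $$ (i,j) = (A *\<^sub>v unit_vec m j) $ i" using mv_unit[OF A j i] by simp
  also have "\<dots> = (B *\<^sub>v unit_vec m j) $ i" using H[OF j] by simp
  also have "\<dots> = B $$ (i,j)" using mv_unit[OF B j i] by simp
  finally show "A $$ (i,j) = B $$ (i,j)" .
qed (insert A B, auto)

lemma tr_comm:
  assumes cm: "\<And>x y::'a::ring_1. x * y = y * x"
    and A: "(A :: 'a mat) \<in> carrier_mat n m" and B: "B \<in> carrier_mat m n"
  shows "mtr (A * B) = mtr (B * A)"
proof -
  have "mtr (A * B) = (\<Sum>i<n. \<Sum>l<m. A $$ (i,l) * B $$ (l,i))"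
    unfolding mtr_def using A B by (simp add: scalar_prod_def lessThan_atLeast0)
  also have "\<dots> = (\<Sum>l<m. \<Sum>i<n. B $$ (l,i) * A $$ (i,l))"
    by (subst sum.swap, simp add: cm)
  also have "\<dots> = mtr (B * A)"
    unfolding mtr_def using A B by (simp add: scalar_prod_def lessThan_atLeast0)
  finally show ?thesis .
qed

lemma sim_pow:
  assumes P: "(P :: 'a::semiring_1 mat) \<in> carrier_mat n n" and P': "P' \<in> carrier_mat n n"
    and N: "N \<in> carrier_mat n n" and PP: "P * P' = 1\<^sub>m n"
  shows "(P' * N * P) ^\<^sub>m k = P' * N ^\<^sub>m k * P \<or> k = 0"
proof (induct k)
  case 0 thus ?case by simp
next
  case (Suc k)
  show ?case
  proof (cases k)
    case 0 thus ?thesis using P P' N by simp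
  next
    case (Suc k')
    hence IH: "(P' * N * P) ^\<^sub>m k = P' * N ^\<^sub>m k * P" using Suc.hyps by simp
    have Nk: "N ^\<^sub>m k \<in> carrier_mat n n" using N by simp
    have "(P' * N * P) ^\<^sub>m Suc k = (P' * N ^\<^sub>m k * P) * (P' * N * P)" using IH by simp
    also have "\<dots> = (P' * N ^\<^sub>m k) * (P * (P' * N * P))"
      by (rule assoc_mult_mat[of _ n n _ n _ n], insert P P' N Nk, auto)
    also have "P * (P' * N * P) = (P * P') * (N * P)"
      using P P' N by (simp add: assoc_mult_mat[of _ n n _ n _ n])
    also have "\<dots> = N * P" unfolding PP using N P by simp
    also have "(P' * N ^\<^sub>m k) * (N * P) = P' * (N ^\<^sub>m k * N) * P"
      using P P' N Nk by (simp add: assoc_mult_mat[of _ n n _ n _ n])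
    finally show ?thesis by simp
  qed
qed

lemma sim_nilp:
  assumes P: "(P :: 'a::semiring_1 mat) \<in> carrier_mat n n" and P': "P' \<in> carrier_mat n n"
    and N: "N \<in> carrier_mat n n" and PP: "P * P' = 1\<^sub>m n" and nN: "N ^\<^sub>m k = 0\<^sub>m n n"
  shows "(P' * N * P) ^\<^sub>m (Suc k) = 0\<^sub>m n n"
proof -
  have "(P' * N * P) ^\<^sub>m (Suc k) = P' * N ^\<^sub>m (Suc k) * P"
    using sim_pow[OF P P' N PP, of "Suc k"] by simp
  also have "N ^\<^sub>m (Suc k) = 0\<^sub>m n n" using nN N by simp
  finally show ?thesis using P P' by simp
qed

lemma sim_tr:
  assumes cm: "\<And>x y::'a::ring_1. x * y = y * x"
    and P: "(P :: 'a mat) \<in> carrier_mat n n" and P': "P' \<in> carrier_mat n n"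
    and N: "N \<in> carrier_mat n n" and PP: "P * P' = 1\<^sub>m n"
  shows "mtr (P' * N * P) = mtr N"
proof -
  have "mtr (P' * N * P) = mtr (P' * (N * P))" using P P' N by simp
  also have "\<dots> = mtr ((N * P) * P')" by (rule tr_comm[OF cm], insert P P' N, auto)
  also have "(N * P) * P' = N" using P P' N PP by simp
  finally show ?thesis .
qed

lemma blk_pow:
  assumes a: "(a :: 'a::semiring_1 mat) \<in> carrier_mat k k" and x: "x \<in> carrier_mat k l"
    and b: "b \<in> carrier_mat l l"
  shows "\<exists>y \<in> carrier_mat k l. (four_block_mat a x (0\<^sub>m l k) b) ^\<^sub>m j
            = four_block_mat (a ^\<^sub>m j) y (0\<^sub>m l k) (b ^\<^sub>m j)"
proof (induct j)
  case 0
  have "four_block_mat (1\<^sub>m k) (0\<^sub>m k l) (0\<^sub>m l k) (1\<^sub>m l) = (1\<^sub>m (k + l) :: 'a mat)"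
    by (rule eq_matI, auto)
  thus ?case using a b by (intro bexI[of _ "0\<^sub>m k l"], auto)
next
  case (Suc j)
  then obtain y where y: "y \<in> carrier_mat k l" and
    e: "(four_block_mat a x (0\<^sub>m l k) b) ^\<^sub>m j = four_block_mat (a ^\<^sub>m j) y (0\<^sub>m l k) (b ^\<^sub>m j)" by blast
  have "(four_block_mat a x (0\<^sub>m l k) b) ^\<^sub>m Suc j
      = four_block_mat (a ^\<^sub>m j) y (0\<^sub>m l k) (b ^\<^sub>m j) * four_block_mat a x (0\<^sub>m l k) b"
    using e by simp
  also have "\<dots> = four_block_mat (a ^\<^sub>m j * a + y * 0\<^sub>m l k) (a ^\<^sub>m j * x + y * b)
      (0\<^sub>m l k * a + b ^\<^sub>m j * 0\<^sub>m l k) (0\<^sub>m l k * x + b ^\<^sub>m j * b)"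
    by (rule mult_four_block_mat, insert a b x y, auto)
  also have "\<dots> = four_block_mat (a ^\<^sub>m Suc j) (a ^\<^sub>m j * x + y * b) (0\<^sub>m l k) (b ^\<^sub>m Suc j)"
  proof -
    have c1: "a ^\<^sub>m j * a \<in> carrier_mat k k" using a by simp
    have c2: "b ^\<^sub>m j * b \<in> carrier_mat l l" using b by simp
    show ?thesis using a b x y c1 c2 by simp
  qed
  finally show ?case using a b x y by (intro bexI[of _ "a ^\<^sub>m j * x + y * b"], auto)
qed

lemma mv_rs:
  assumes M: "(M :: 'a::ring_1 mat) \<in> carrier_mat n m" and x: "x \<in> carrier_vec m" and i: "i < n"
  shows "(M *\<^sub>v vec m (\<lambda>l. x $ l * a)) $ i = (M *\<^sub>v x) $ i * a"
proof -
  have "(M *\<^sub>v vec m (\<lambda>l. x $ l * a)) $ i = (\<Sum>l<m. M $$ (i,l) * (x $ l * a))"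
    using M i by (simp add: scalar_prod_def lessThan_atLeast0)
  also have "\<dots> = (\<Sum>l<m. M $$ (i,l) * x $ l) * a"
    by (simp add: sum_distrib_right mult.assoc)
  also have "\<dots> = (M *\<^sub>v x) $ i * a"
    using M x i by (simp add: scalar_prod_def lessThan_atLeast0)
  finally show ?thesis .
qed

lemma ker_vec:
  assumes N: "(N :: 'a::ring_1 mat) \<in> carrier_mat n n" and n: "n > 0" and nN: "N ^\<^sub>m k = 0\<^sub>m n n"
  shows "\<exists>v \<in> carrier_vec n. v \<noteq> 0\<^sub>v n \<and> N *\<^sub>v v = 0\<^sub>v n"
proof (rule ccontr)
  assume "\<not> ?thesis"
  hence H: "\<And>v. v \<in> carrier_vec n \<Longrightarrow> v \<noteq> 0\<^sub>v n \<Longrightarrow> N *\<^sub>v v \<noteq> 0\<^sub>v n" by blast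
  define u :: "'a vec" where "u = unit_vec n 0"
  have uc: "u \<in> carrier_vec n" unfolding u_def by simp
  have u0: "u \<noteq> 0\<^sub>v n" unfolding u_def using n by simp
  have "((\<lambda>x. N *\<^sub>v x) ^^ p) u \<noteq> 0\<^sub>v n" for p
  proof (induct p)
    case 0 thus ?case using u0 by simp
  next
    case (Suc p)
    have "((\<lambda>x. N *\<^sub>v x) ^^ p) u \<in> carrier_vec n" by (rule funpow_carrier[OF N uc])
    thus ?case using H Suc by simp
  qed
  moreover have "((\<lambda>x. N *\<^sub>v x) ^^ k) u = 0\<^sub>v n"
  proof -
    have "((\<lambda>x. N *\<^sub>v x) ^^ k) u = N ^\<^sub>m k *\<^sub>v u" using powv[OF N uc] by simp
    also have "\<dots> = 0\<^sub>v n" unfolding nN by (rule eq_vecI, insert uc, auto)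
    finally show ?thesis .
  qed
  ultimately show False by blast
qed

definition tv :: "nat \<Rightarrow> 'a::ring_1 vec \<Rightarrow> nat \<Rightarrow> 'a mat" where
  "tv n w i = mat n n (\<lambda>(a,b). (if a = b then 1 else 0) + (if b = i then w $ a else 0))"

lemma tv_carrier[simp]: "tv n w i \<in> carrier_mat n n" unfolding tv_def by simp

lemma tv_mv:
  assumes w: "w \<in> carrier_vec n" and y: "y \<in> carrier_vec n" and i: "i < n"
  shows "tv n w i *\<^sub>v y = vec n (\<lambda>a. y $ a + w $ a * y $ i)"
proof (rule eq_vecI)
  fix a assume "a < dim_vec (vec n (\<lambda>a. y $ a + w $ a * y $ i))"
  hence a: "a < n" by simp
  have "(tv n w i *\<^sub>v y) $ a = (\<Sum>b<n. ((if a = b then 1 else 0) + (if b = i then w $ a else 0)) * y $ b)"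
    using a y unfolding tv_def by (simp add: scalar_prod_def lessThan_atLeast0)
  also have "\<dots> = (\<Sum>b<n. (if a = b then y $ b else 0)) + (\<Sum>b<n. (if b = i then w $ a * y $ b else 0))"
  proof -
    have "(\<Sum>b<n. ((if a = b then 1 else 0) + (if b = i then w $ a else 0)) * y $ b)
      = (\<Sum>b<n. (if a = b then y $ b else 0) + (if b = i then w $ a * y $ b else 0))"
      by (rule sum.cong, auto simp: distrib_right)
    thus ?thesis by (simp add: sum.distrib)
  qed
  also have "\<dots> = y $ a + w $ a * y $ i" using a i by simp
  finally show "(tv n w i *\<^sub>v y) $ a = vec n (\<lambda>a. y $ a + w $ a * y $ i) $ a" using a by simp
qed (simp add: tv_def)

lemma tv_inv:
  assumes w: "w \<in> carrier_vec n" and i: "i < n" and wi: "w $ i = 0"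
  shows "tv n w i * tv n (- w) i = 1\<^sub>m n"
proof (rule mat_eq_by_mv[of _ n n])
  fix j assume j: "j < n"
  let ?u = "unit_vec n j :: 'a vec"
  have "(tv n w i * tv n (- w) i) *\<^sub>v ?u = tv n w i *\<^sub>v (tv n (- w) i *\<^sub>v ?u)"
    by (rule assoc_mult_mat_vec[of _ n n _ n], auto)
  also have "tv n (- w) i *\<^sub>v ?u = vec n (\<lambda>a. ?u $ a + (- w) $ a * ?u $ i)"
    by (rule tv_mv, insert w i, auto)
  also have "tv n w i *\<^sub>v \<dots> = ?u"
    by (subst tv_mv, insert w i wi, auto)
  finally show "(tv n w i * tv n (- w) i) *\<^sub>v ?u = 1\<^sub>m n *\<^sub>v ?u" by simp
qed auto

definition sw :: "nat \<Rightarrow> nat \<Rightarrow> nat" where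
  "sw i b = (if b = 0 then i else if b = i then 0 else b)"

lemma sw_sw[simp]: "sw i (sw i b) = b" unfolding sw_def by auto
lemma sw_lt: "i < n \<Longrightarrow> b < n \<Longrightarrow> sw i b < n" unfolding sw_def by auto

definition swm :: "nat \<Rightarrow> nat \<Rightarrow> 'a::semiring_1 mat" where
  "swm n i = mat n n (\<lambda>(a,b). if a = sw i b then 1 else 0)"

lemma swm_carrier[simp]: "swm n i \<in> carrier_mat n n" unfolding swm_def by simp

lemma swm_mv:
  assumes y: "(y :: 'a::semiring_1 vec) \<in> carrier_vec n" and i: "i < n"
  shows "swm n i *\<^sub>v y = vec n (\<lambda>a. y $ sw i a)"
proof (rule eq_vecI)
  fix a assume "a < dim_vec (vec n (\<lambda>a. y $ sw i a))"
  hence a: "a < n" by simp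
  have "(swm n i *\<^sub>v y) $ a = (\<Sum>b<n. (if a = sw i b then 1 else 0) * y $ b)"
    using a y unfolding swm_def by (simp add: scalar_prod_def lessThan_atLeast0)
  also have "\<dots> = (\<Sum>b<n. if b = sw i a then y $ b else 0)"
    by (rule sum.cong, auto)
  also have "\<dots> = y $ sw i a" using sw_lt[OF i a] by simp
  finally show "(swm n i *\<^sub>v y) $ a = vec n (\<lambda>a. y $ sw i a) $ a" using a by simp
qed (simp add: swm_def)

lemma swm_inv:
  assumes i: "i < n"
  shows "swm n i * swm n i = (1\<^sub>m n :: 'a::semiring_1 mat)"
proof (rule mat_eq_by_mv[of _ n n])
  fix j assume j: "j < n"
  let ?u = "unit_vec n j :: 'a vec"
  have "(swm n i * swm n i) *\<^sub>v ?u = swm n i *\<^sub>v (swm n i *\<^sub>v ?u)"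
    by (rule assoc_mult_mat_vec[of _ n n _ n], auto)
  also have "\<dots> = ?u" using i
    by (simp add: swm_mv, intro eq_vecI, auto simp: sw_lt)
  finally show "(swm n i * swm n i) *\<^sub>v ?u = 1\<^sub>m n *\<^sub>v ?u" by simp
qed auto

lemma nil_tr:
  assumes cm: "\<And>x y::'a::division_ring. x * y = y * x"
  shows "(N :: 'a mat) \<in> carrier_mat n n \<Longrightarrow> N ^\<^sub>m k = 0\<^sub>m n n \<Longrightarrow> mtr N = 0"
proof (induct n arbitrary: N k)
  case 0
  thus ?case unfolding mtr_def by simp
next
  case (Suc m)
  let ?n = "Suc m"
  have N: "N \<in> carrier_mat ?n ?n" and nN: "N ^\<^sub>m k = 0\<^sub>m ?n ?n" by fact+
  obtain v where vc: "v \<in> carrier_vec ?n" and v0: "v \<noteq> 0\<^sub>v ?n" and Nv: "N *\<^sub>v v = 0\<^sub>v ?n"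
    using ker_vec[OF N _ nN] by auto
  obtain i where i: "i < ?n" and vi: "v $ i \<noteq> 0"
  proof -
    have "\<exists>i < ?n. v $ i \<noteq> 0"
    proof (rule ccontr)
      assume "\<not> ?thesis"
      hence "v = 0\<^sub>v ?n" using vc by (intro eq_vecI, auto)
      thus False using v0 by simp
    qed
    thus ?thesis using that by blast
  qed
  define c where "c = inverse (v $ i)"
  define v' where "v' = vec ?n (\<lambda>l. v $ l * c)"
  have v'c: "v' \<in> carrier_vec ?n" unfolding v'_def by simp
  have v'i: "v' $ i = 1" unfolding v'_def c_def using i vi by simp
  have Nv': "N *\<^sub>v v' = 0\<^sub>v ?n"
  proof (rule eq_vecI)
    fix r assume "r < dim_vec (0\<^sub>v ?n :: 'a vec)"
    hence r: "r < ?n" by simp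
    show "(N *\<^sub>v v') $ r = 0\<^sub>v ?n $ r"
      unfolding v'_def mv_rs[OF N vc r] Nv using r by simp
  qed (insert N, simp)
  define w where "w = v' - unit_vec ?n i"
  have wc: "w \<in> carrier_vec ?n" unfolding w_def using v'c by simp
  have wi: "w $ i = 0" unfolding w_def using v'i i v'c by simp
  have wi': "(- w) $ i = 0" using wi i wc by simp
  define R where "R = tv ?n w i"
  define R' where "R' = tv ?n (- w) i"
  define T :: "'a mat" where "T = swm ?n i"
  have Rc: "R \<in> carrier_mat ?n ?n" and R'c: "R' \<in> carrier_mat ?n ?n" and Tc: "T \<in> carrier_mat ?n ?n"
    unfolding R_def R'_def T_def by auto
  have RR': "R * R' = 1\<^sub>m ?n" unfolding R_def R'_def by (rule tv_inv[OF wc i wi])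
  have R'R: "R' * R = 1\<^sub>m ?n"
    using tv_inv[of "- w" ?n i] wc i wi' unfolding R_def R'_def by simp
  have TT: "T * T = 1\<^sub>m ?n" unfolding T_def by (rule swm_inv[OF i])
  define P where "P = R * T"
  define P' where "P' = T * R'"
  have Pc: "P \<in> carrier_mat ?n ?n" and P'c: "P' \<in> carrier_mat ?n ?n"
    unfolding P_def P'_def using Rc R'c Tc by auto
  have PP': "P * P' = 1\<^sub>m ?n"
  proof -
    have "P * P' = R * (T * T) * R'" unfolding P_def P'_def
      using Rc R'c Tc by (simp add: assoc_mult_mat[of _ ?n ?n _ ?n _ ?n])
    thus ?thesis unfolding TT using Rc R'c RR' by simp
  qed
  have Pu: "P *\<^sub>v unit_vec ?n 0 = v'"
  proof -
    have "P *\<^sub>v unit_vec ?n 0 = R *\<^sub>v (T *\<^sub>v unit_vec ?n 0)"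
      unfolding P_def by (rule assoc_mult_mat_vec[of _ ?n ?n _ ?n], insert Rc Tc, auto)
    also have "T *\<^sub>v unit_vec ?n 0 = unit_vec ?n i"
      unfolding T_def using i
      by (subst swm_mv, simp, simp, intro eq_vecI, auto simp: sw_def)
    also have "R *\<^sub>v unit_vec ?n i = v'"
      unfolding R_def using i wc v'c
      by (subst tv_mv, simp, simp, simp, intro eq_vecI, auto simp: w_def)
    finally show ?thesis .
  qed
  define N' where "N' = P' * N * P"
  have N'c: "N' \<in> carrier_mat ?n ?n" unfolding N'_def using P'c N Pc by simp
  have N'u: "N' *\<^sub>v unit_vec ?n 0 = 0\<^sub>v ?n"
  proof -
    have "N' *\<^sub>v unit_vec ?n 0 = P' *\<^sub>v (N *\<^sub>v (P *\<^sub>v unit_vec ?n 0))"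
      unfolding N'_def using P'c N Pc by (simp add: assoc_mult_mat_vec[of _ ?n ?n _ ?n])
    also have "\<dots> = 0\<^sub>v ?n" unfolding Pu Nv' using P'c by simp
    finally show ?thesis .
  qed
  have N'col: "N' $$ (r, 0) = 0" if r: "r < ?n" for r
    using mv_unit[OF N'c _ r, of 0] N'u r by simp
  obtain N1 N2 N3 N4 where sb: "split_block N' 1 1 = (N1, N2, N3, N4)" by (metis prod_cases4)
  have dims: "dim_row N' = 1 + m" "dim_col N' = 1 + m" using N'c by auto
  note spl = split_block[OF sb dims]
  have N1: "N1 = 0\<^sub>m 1 1" using sb N'col dims unfolding split_block_def Let_def
    by (auto intro!: eq_matI)
  have N3: "N3 = 0\<^sub>m m 1" using sb N'col dims unfolding split_block_def Let_def
    by (auto intro!: eq_matI)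
  have N4: "N4 = mat m m (\<lambda>(r,c). N' $$ (r + 1, c + 1))"
    using sb dims unfolding split_block_def Let_def by auto
  have N'eq: "N' = four_block_mat N1 N2 (0\<^sub>m m 1) N4" using spl(5) N3 by simp
  have nN': "N' ^\<^sub>m (Suc k) = 0\<^sub>m ?n ?n"
    unfolding N'_def by (rule sim_nilp[OF Pc P'c N PP' nN])
  obtain y where yc: "y \<in> carrier_mat 1 m"
    and pw: "N' ^\<^sub>m (Suc k) = four_block_mat (N1 ^\<^sub>m Suc k) y (0\<^sub>m m 1) (N4 ^\<^sub>m Suc k)"
    using blk_pow[OF spl(1) spl(2) spl(4), of "Suc k"] N'eq by auto
  have nN4: "N4 ^\<^sub>m (Suc k) = 0\<^sub>m m m"
  proof (rule eq_matI)
    fix r c assume rc: "r < dim_row (0\<^sub>m m m :: 'a mat)" "c < dim_col (0\<^sub>m m m :: 'a mat)"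
    hence r: "r < m" and c: "c < m" by auto
    have "four_block_mat (N1 ^\<^sub>m Suc k) y (0\<^sub>m m 1) (N4 ^\<^sub>m Suc k) $$ (Suc r, Suc c) = 0"
      using pw nN' r c by simp
    thus "(N4 ^\<^sub>m Suc k) $$ (r, c) = 0\<^sub>m m m $$ (r, c)"
      using r c spl(1) spl(4) by simp
  qed (insert spl(4), auto)
  have tr4: "mtr N4 = 0" by (rule Suc.hyps[OF spl(4) nN4])
  have "mtr N' = (\<Sum>r<Suc m. N' $$ (r,r))" unfolding mtr_def using N'c by simp
  also have "\<dots> = N' $$ (0,0) + (\<Sum>r<m. N' $$ (Suc r, Suc r))" by (rule sum.lessThan_Suc_shift)
  also have "\<dots> = mtr N4" unfolding mtr_def N4 using N'col[of 0] by simp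
  finally have "mtr N' = 0" using tr4 by simp
  moreover have "mtr N' = mtr N" unfolding N'_def by (rule sim_tr[OF cm Pc P'c N PP'])
  ultimately show ?case by simp
qed

lemma mv_comb:
  assumes M: "(M :: 'a::ring_1 mat) \<in> carrier_mat n m" and p: "p \<in> carrier_vec m" and q: "q \<in> carrier_vec m"
    and i: "i < n"
  shows "(M *\<^sub>v vec m (\<lambda>l. p $ l - q $ l * s)) $ i = (M *\<^sub>v p) $ i - (M *\<^sub>v q) $ i * s"
proof -
  have "(M *\<^sub>v vec m (\<lambda>l. p $ l - q $ l * s)) $ i = (\<Sum>l<m. M $$ (i,l) * (p $ l - q $ l * s))"
    using M i by (simp add: scalar_prod_def lessThan_atLeast0)
  also have "\<dots> = (\<Sum>l<m. M $$ (i,l) * p $ l) - (\<Sum>l<m. M $$ (i,l) * q $ l) * s"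
    by (simp add: sum_subtractf sum_distrib_right right_diff_distrib mult.assoc)
  also have "\<dots> = (M *\<^sub>v p) $ i - (M *\<^sub>v q) $ i * s"
    using M p q i by (simp add: scalar_prod_def lessThan_atLeast0)
  finally show ?thesis .
qed

lemma sp_comb:
  assumes r: "(r :: 'a::ring_1 vec) \<in> carrier_vec m" and p: "p \<in> carrier_vec m" and q: "q \<in> carrier_vec m"
  shows "r \<bullet> vec m (\<lambda>l. p $ l - q $ l * s) = r \<bullet> p - (r \<bullet> q) * s"
proof -
  have "r \<bullet> vec m (\<lambda>l. p $ l - q $ l * s) = (\<Sum>l<m. r $ l * (p $ l - q $ l * s))"
    using r by (simp add: scalar_prod_def lessThan_atLeast0)
  also have "\<dots> = (\<Sum>l<m. r $ l * p $ l) - (\<Sum>l<m. r $ l * q $ l) * s"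
    by (simp add: sum_subtractf sum_distrib_right right_diff_distrib mult.assoc)
  also have "\<dots> = r \<bullet> p - (r \<bullet> q) * s"
    using r p q by (simp add: scalar_prod_def lessThan_atLeast0)
  finally show ?thesis .
qed

lemma peel:
  assumes cm: "\<And>x y::'a::division_ring. x * y = y * x"
    and ec: "(e :: 'a mat) \<in> carrier_mat n n" and ee: "e * e = e"
    and i0: "i0 < n" and j0: "j0 < n" and nz: "e $$ (i0, j0) \<noteq> 0"
    and K: "\<forall>y\<in>carrier_vec n. (\<forall>i\<in>I. (e *\<^sub>v y) $ i = 0) \<longrightarrow> e *\<^sub>v y = 0\<^sub>v n"
    and iI: "i0 \<in> I"
  shows "\<exists>e'. e' \<in> carrier_mat n n \<and> e' * e' = e' \<and> mtr e = mtr e' + 1 \<and>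
      (\<forall>y\<in>carrier_vec n. (\<forall>i\<in>I - {i0}. (e' *\<^sub>v y) $ i = 0) \<longrightarrow> e' *\<^sub>v y = 0\<^sub>v n)"
proof -
  define c where "c = inverse (e $$ (i0, j0))"
  define u :: "'a vec" where "u = unit_vec n j0"
  have uc: "u \<in> carrier_vec n" unfolding u_def by simp
  define x where "x = vec n (\<lambda>l. (e *\<^sub>v u) $ l * c)"
  define \<rho> where "\<rho> = row e i0"
  have xc: "x \<in> carrier_vec n" unfolding x_def by simp
  have \<rho>c: "\<rho> \<in> carrier_vec n" unfolding \<rho>_def carrier_vec_def using ec by simp
  have eyi0: "(e *\<^sub>v y) $ i0 = \<rho> \<bullet> y" for y unfolding \<rho>_def using ec i0 by simp
  have eey: "e *\<^sub>v (e *\<^sub>v y) = e *\<^sub>v y" if y: "y \<in> carrier_vec n" for y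
  proof -
    have "e *\<^sub>v (e *\<^sub>v y) = (e * e) *\<^sub>v y" using ec y by simp
    thus ?thesis unfolding ee .
  qed
  have ex: "e *\<^sub>v x = x"
  proof (rule eq_vecI)
    fix a assume "a < dim_vec x" hence a: "a < n" unfolding x_def by simp
    have "(e *\<^sub>v x) $ a = (e *\<^sub>v (e *\<^sub>v u)) $ a * c"
      unfolding x_def by (rule mv_rs[OF ec _ a], insert ec uc, simp)
    also have "\<dots> = x $ a" unfolding eey[OF uc] x_def using a by simp
    finally show "(e *\<^sub>v x) $ a = x $ a" .
  qed (insert ec xc, auto)
  have xi0: "x $ i0 = 1" unfolding x_def c_def u_def using i0 j0 nz ec by (simp add: mv_unit)
  have \<rho>x: "\<rho> \<bullet> x = 1" using eyi0[of x] ex xi0 by simp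
  have \<rho>e: "\<rho> \<bullet> (e *\<^sub>v y) = \<rho> \<bullet> y" if y: "y \<in> carrier_vec n" for y
    using eyi0[of "e *\<^sub>v y"] eyi0[of y] eey[OF y] by simp
  define e' where "e' = mat n n (\<lambda>(a,b). e $$ (a,b) - x $ a * \<rho> $ b)"
  have e'c: "e' \<in> carrier_mat n n" unfolding e'_def by simp
  have e'y: "e' *\<^sub>v y = vec n (\<lambda>a. (e *\<^sub>v y) $ a - x $ a * (\<rho> \<bullet> y))" if y: "y \<in> carrier_vec n" for y
  proof (rule eq_vecI)
    fix a assume "a < dim_vec (vec n (\<lambda>a. (e *\<^sub>v y) $ a - x $ a * (\<rho> \<bullet> y)))"
    hence a: "a < n" by simp
    have "(e' *\<^sub>v y) $ a = (\<Sum>b<n. (e $$ (a,b) - x $ a * \<rho> $ b) * y $ b)"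
      using a y unfolding e'_def by (simp add: scalar_prod_def lessThan_atLeast0)
    also have "\<dots> = (\<Sum>b<n. e $$ (a,b) * y $ b) - x $ a * (\<Sum>b<n. \<rho> $ b * y $ b)"
      by (simp add: sum_subtractf sum_distrib_left left_diff_distrib mult.assoc)
    also have "\<dots> = (e *\<^sub>v y) $ a - x $ a * (\<rho> \<bullet> y)"
      using a y ec \<rho>c by (simp add: scalar_prod_def lessThan_atLeast0)
    finally show "(e' *\<^sub>v y) $ a = vec n (\<lambda>a. (e *\<^sub>v y) $ a - x $ a * (\<rho> \<bullet> y)) $ a" using a by simp
  qed (insert e'c, simp)
  have ee'y: "e *\<^sub>v (e' *\<^sub>v y) = e' *\<^sub>v y" if y: "y \<in> carrier_vec n" for y
  proof -
    have "e *\<^sub>v (e' *\<^sub>v y) = e *\<^sub>v vec n (\<lambda>a. (e *\<^sub>v y) $ a - x $ a * (\<rho> \<bullet> y))" using e'y[OF y] by simp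
    also have "\<dots> = vec n (\<lambda>a. (e *\<^sub>v y) $ a - x $ a * (\<rho> \<bullet> y))"
    proof (rule eq_vecI)
      fix a assume "a < dim_vec (vec n (\<lambda>a. (e *\<^sub>v y) $ a - x $ a * (\<rho> \<bullet> y)))"
      hence a: "a < n" by simp
      show "(e *\<^sub>v vec n (\<lambda>a. (e *\<^sub>v y) $ a - x $ a * (\<rho> \<bullet> y))) $ a =
            vec n (\<lambda>a. (e *\<^sub>v y) $ a - x $ a * (\<rho> \<bullet> y)) $ a"
        unfolding mv_comb[OF ec _ xc a, of "e *\<^sub>v y", OF mult_mat_vec_carrier[OF ec y]]
        using a eey[OF y] ex by simp
    qed (insert ec, simp)
    also have "\<dots> = e' *\<^sub>v y" using e'y[OF y] by simp
    finally show ?thesis .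
  qed
  have \<rho>e'y: "\<rho> \<bullet> (e' *\<^sub>v y) = 0" if y: "y \<in> carrier_vec n" for y
  proof -
    have "\<rho> \<bullet> (e' *\<^sub>v y) = \<rho> \<bullet> (e *\<^sub>v y) - (\<rho> \<bullet> x) * (\<rho> \<bullet> y)"
      unfolding e'y[OF y] by (rule sp_comb[OF \<rho>c _ xc], insert ec y, simp)
    thus ?thesis using \<rho>e[OF y] \<rho>x by simp
  qed
  have e'e': "e' * e' = e'"
  proof (rule mat_eq_by_mv[of _ n n])
    fix j assume j: "j < n"
    let ?u = "unit_vec n j :: 'a vec"
    have uj: "?u \<in> carrier_vec n" by simp
    have z: "e' *\<^sub>v ?u \<in> carrier_vec n" using e'c by simp
    have zz: "\<And>z::'a vec. z \<in> carrier_vec n \<Longrightarrow> vec n (\<lambda>a. z $ a - x $ a * 0) = z"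
      by (intro eq_vecI, auto)
    have "(e' * e') *\<^sub>v ?u = e' *\<^sub>v (e' *\<^sub>v ?u)" using e'c by simp
    also have "\<dots> = vec n (\<lambda>a. (e *\<^sub>v (e' *\<^sub>v ?u)) $ a - x $ a * (\<rho> \<bullet> (e' *\<^sub>v ?u)))"
      by (rule e'y[OF z])
    also have "\<dots> = e' *\<^sub>v ?u" unfolding ee'y[OF uj] \<rho>e'y[OF uj] by (rule zz[OF z])
    finally show "(e' * e') *\<^sub>v ?u = e' *\<^sub>v ?u" .
  qed (insert e'c, auto)
  have tr: "mtr e = mtr e' + 1"
  proof -
    have "mtr e' = (\<Sum>a<n. e $$ (a,a) - x $ a * \<rho> $ a)" unfolding mtr_def e'_def by simp
    also have "\<dots> = mtr e - (\<Sum>a<n. \<rho> $ a * x $ a)"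
      unfolding mtr_def using ec by (simp add: sum_subtractf cm)
    also have "(\<Sum>a<n. \<rho> $ a * x $ a) = 1" using \<rho>x \<rho>c xc by (simp add: scalar_prod_def lessThan_atLeast0)
    finally show ?thesis by simp
  qed
  have K': "\<forall>y\<in>carrier_vec n. (\<forall>i\<in>I - {i0}. (e' *\<^sub>v y) $ i = 0) \<longrightarrow> e' *\<^sub>v y = 0\<^sub>v n"
  proof (intro ballI impI)
    fix y :: "'a vec" assume y: "y \<in> carrier_vec n" and H: "\<forall>i\<in>I - {i0}. (e' *\<^sub>v y) $ i = 0"
    let ?z = "e' *\<^sub>v y"
    have zc: "?z \<in> carrier_vec n" using e'c y by simp
    have "?z $ i0 = (e *\<^sub>v y) $ i0 - x $ i0 * (\<rho> \<bullet> y)" unfolding e'y[OF y] using i0 by simp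
    hence zi0: "?z $ i0 = 0" using eyi0[of y] xi0 by simp
    have "\<forall>i\<in>I. (e *\<^sub>v ?z) $ i = 0" unfolding ee'y[OF y] using H zi0 by auto
    hence "e *\<^sub>v ?z = 0\<^sub>v n" using K zc by blast
    thus "?z = 0\<^sub>v n" unfolding ee'y[OF y] .
  qed
  show ?thesis using e'c e'e' tr K' by blast
qed

lemma idem_tr:
  assumes cm: "\<And>x y::'a::division_ring. x * y = y * x"
  shows "card I = m \<Longrightarrow> finite I \<Longrightarrow> I \<subseteq> {..<n} \<Longrightarrow> (e :: 'a mat) \<in> carrier_mat n n \<Longrightarrow> e * e = e \<Longrightarrow>
    (\<forall>y\<in>carrier_vec n. (\<forall>i\<in>I. (e *\<^sub>v y) $ i = 0) \<longrightarrow> e *\<^sub>v y = 0\<^sub>v n) \<Longrightarrow>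
    \<exists>r \<le> m. mtr e = of_nat r \<and> (r = 0 \<longrightarrow> e = 0\<^sub>m n n)"
proof (induct m arbitrary: I e)
  case (0 I e)
  hence "I = {}" by simp
  hence "e *\<^sub>v y = 0\<^sub>v n" if "y \<in> carrier_vec n" for y using 0 that by simp
  hence "e = 0\<^sub>m n n" by (intro mat_eq_by_mv[of _ n n], insert 0, auto)
  thus ?case unfolding mtr_def by simp
next
  case (Suc m I e)
  show ?case
  proof (cases "\<forall>i\<in>I. \<forall>j<n. e $$ (i,j) = 0")
    case True
    have "e *\<^sub>v y = 0\<^sub>v n" if y: "y \<in> carrier_vec n" for y
    proof -
      have "(e *\<^sub>v y) $ i = 0" if i: "i \<in> I" for i
      proof -
        have iL: "i < n" using i Suc by auto
        have "(e *\<^sub>v y) $ i = (\<Sum>l<n. e $$ (i,l) * y $ l)"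
          using Suc iL y by (simp add: scalar_prod_def lessThan_atLeast0)
        thus ?thesis using True i by simp
      qed
      thus ?thesis using Suc y by blast
    qed
    hence "e = 0\<^sub>m n n" by (intro mat_eq_by_mv[of _ n n], insert Suc, auto)
    thus ?thesis by (intro exI[of _ 0], simp add: mtr_def)
  next
    case False
    then obtain i0 j0 where i0: "i0 \<in> I" and j0: "j0 < n" and nz: "e $$ (i0,j0) \<noteq> 0" by blast
    have i0n: "i0 < n" using i0 Suc by auto
    obtain e' where e'c: "e' \<in> carrier_mat n n" and e'e': "e' * e' = e'" and tr: "mtr e = mtr e' + 1"
      and K': "\<forall>y\<in>carrier_vec n. (\<forall>i\<in>I - {i0}. (e' *\<^sub>v y) $ i = 0) \<longrightarrow> e' *\<^sub>v y = 0\<^sub>v n"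
      using peel[OF cm _ _ i0n j0 nz _ i0] Suc by blast
    have c': "card (I - {i0}) = m" using Suc i0 by simp
    have f': "finite (I - {i0})" using Suc by simp
    have s': "I - {i0} \<subseteq> {..<n}" using Suc by auto
    obtain r where r: "r \<le> m" and tr': "mtr e' = of_nat r"
      using Suc.hyps[OF c' f' s' e'c e'e' K'] by auto
    show ?thesis using r tr tr' by (intro exI[of _ "Suc r"], auto simp: add.commute)
  qed
qed

lemma notGWNC_F3:
  assumes H: "\<forall>x::'a::division_ring. x = 0 \<or> x = 1 \<or> x = -1" and c1: "(1::'a) \<noteq> -1" and n: "n \<ge> 3"
  shows "\<not> GWNC (ring_mat TYPE('a) n ())"
proof
  assume G: "GWNC (ring_mat TYPE('a) n ())"
  have cm: "\<And>x y::'a. x * y = y * x" using F3_comm[OF H] by blast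
  have lcm: "\<And>x y z::'a. x * (y * z) = y * (x * z)" by (metis cm mult.assoc)
  define A where "A = mat n n (\<lambda>(i,j). if i = j \<and> i = 0 then 1 else if i = j \<and> i = 1 then -1 else (0::'a))"
  have Ac: "A \<in> carrier_mat n n" unfolding A_def by simp
  have nu: "\<not> unitm n A"
  proof
    assume "unitm n A"
    then obtain B where Bc: "B \<in> carrier_mat n n" and AB: "A * B = 1\<^sub>m n" unfolding unitm_def by blast
    have "(A * B) $$ (2,2) = 0" using Bc n unfolding A_def by (simp add: scalar_prod_def)
    moreover have "(1\<^sub>m n :: 'a mat) $$ (2,2) = 1" using n by simp
    ultimately show False using AB by simp
  qed
  obtain q e where qc: "q \<in> carrier_mat n n" and ec: "e \<in> carrier_mat n n" and nq: "nilp n q"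
    and ee: "e * e = e" and eq: "A = q + e \<or> A = q - e"
    using G Ac nu unfolding GWNC_iff by blast
  obtain \<sigma> :: 'a where sig: "\<sigma> = 1 \<or> \<sigma> = -1"
    and qx: "\<And>(x::'a vec) i. x \<in> carrier_vec n \<Longrightarrow> i < n \<Longrightarrow> (q *\<^sub>v x) $ i = (A *\<^sub>v x) $ i + \<sigma> * (e *\<^sub>v x) $ i"
  proof (cases "A = q + e")
    case True
    hence qe: "q = A - e" by (intro eq_matI, insert qc ec Ac, auto)
    show ?thesis
    proof (rule that[of "-1"])
      fix x :: "'a vec" and i assume x: "x \<in> carrier_vec n" and i: "i < n"
      have "q *\<^sub>v x = A *\<^sub>v x - e *\<^sub>v x" unfolding qe
        by (rule minus_mult_distrib_mat_vec[OF Ac ec x])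
      thus "(q *\<^sub>v x) $ i = (A *\<^sub>v x) $ i + -1 * (e *\<^sub>v x) $ i" using i Ac ec by simp
    qed simp
  next
    case False
    hence "A = q - e" using eq by simp
    hence qe: "q = A + e" by (intro eq_matI, insert qc ec Ac, auto)
    show ?thesis
    proof (rule that[of "1"])
      fix x :: "'a vec" and i assume x: "x \<in> carrier_vec n" and i: "i < n"
      have "q *\<^sub>v x = A *\<^sub>v x + e *\<^sub>v x" unfolding qe
        by (rule add_mult_distrib_mat_vec[OF Ac ec x])
      thus "(q *\<^sub>v x) $ i = (A *\<^sub>v x) $ i + 1 * (e *\<^sub>v x) $ i" using i Ac ec by simp
    qed simp
  qed
  have sig0: "\<sigma> \<noteq> 0" using sig by auto
  have Ax: "(A *\<^sub>v x) $ i = (if i = 0 then x $ 0 else if i = 1 then - x $ 1 else 0)"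
    if x: "x \<in> carrier_vec n" and i: "i < n" for x i
  proof -
    have "(A *\<^sub>v x) $ i = (\<Sum>l<n. A $$ (i,l) * x $ l)"
      using Ac x i by (simp add: scalar_prod_def lessThan_atLeast0)
    also have "\<dots> = (\<Sum>l<n. if l = i then (if i = 0 then x $ 0 else if i = 1 then - x $ 1 else 0) else 0)"
      by (rule sum.cong, simp, insert i, auto simp: A_def)
    also have "\<dots> = (if i = 0 then x $ 0 else if i = 1 then - x $ 1 else 0)" using i by simp
    finally show ?thesis .
  qed
  have eey: "e *\<^sub>v (e *\<^sub>v y) = e *\<^sub>v y" if y: "y \<in> carrier_vec n" for y
  proof -
    have "e *\<^sub>v (e *\<^sub>v y) = (e * e) *\<^sub>v y" using ec y by simp
    thus ?thesis unfolding ee .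
  qed
  have K: "\<forall>y\<in>carrier_vec n. (\<forall>i\<in>{0,1}. (e *\<^sub>v y) $ i = 0) \<longrightarrow> e *\<^sub>v y = 0\<^sub>v n"
  proof (intro ballI impI)
    fix y :: "'a vec" assume y: "y \<in> carrier_vec n" and h: "\<forall>i\<in>{0,1}. (e *\<^sub>v y) $ i = 0"
    define z where "z = e *\<^sub>v y"
    have zc: "z \<in> carrier_vec n" unfolding z_def using ec y by simp
    have ez: "e *\<^sub>v z = z" unfolding z_def by (rule eey[OF y])
    have z01: "z $ 0 = 0" "z $ 1 = 0" using h unfolding z_def by auto
    have qz: "q *\<^sub>v z = vec n (\<lambda>i. \<sigma> * z $ i)"
    proof (rule eq_vecI)
      fix i assume "i < dim_vec (vec n (\<lambda>i. \<sigma> * z $ i))"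
      hence i: "i < n" by simp
      show "(q *\<^sub>v z) $ i = vec n (\<lambda>i. \<sigma> * z $ i) $ i"
        unfolding qx[OF zc i] Ax[OF zc i] ez using i z01 by simp
    qed (insert qc, simp)
    have it: "((\<lambda>x. q *\<^sub>v x) ^^ k) z = vec n (\<lambda>i. \<sigma> ^ k * z $ i)" for k
    proof (induct k)
      case 0 thus ?case using zc by (intro eq_vecI, auto)
    next
      case (Suc k)
      have c: "vec n (\<lambda>i. \<sigma> ^ k * z $ i) \<in> carrier_vec n" by simp
      have "q *\<^sub>v vec n (\<lambda>i. \<sigma> ^ k * z $ i) = vec n (\<lambda>i. \<sigma> ^ Suc k * z $ i)"
      proof (rule eq_vecI)
        fix i assume "i < dim_vec (vec n (\<lambda>i. \<sigma> ^ Suc k * z $ i))"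
        hence i: "i < n" by simp
        have "e *\<^sub>v vec n (\<lambda>i. \<sigma> ^ k * z $ i) = vec n (\<lambda>i. z $ i * \<sigma> ^ k)"
        proof (rule eq_vecI)
          fix j assume "j < dim_vec (vec n (\<lambda>i. z $ i * \<sigma> ^ k))"
          hence j: "j < n" by simp
          have "vec n (\<lambda>i. \<sigma> ^ k * z $ i) = vec n (\<lambda>i. z $ i * \<sigma> ^ k)" by (simp add: cm)
          thus "(e *\<^sub>v vec n (\<lambda>i. \<sigma> ^ k * z $ i)) $ j = vec n (\<lambda>i. z $ i * \<sigma> ^ k) $ j"
            using mv_rs[OF ec zc j, of "\<sigma> ^ k"] ez j by simp
        qed (insert ec, simp)
        moreover have "(A *\<^sub>v vec n (\<lambda>i. \<sigma> ^ k * z $ i)) $ i = 0"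
          unfolding Ax[OF c i] using z01 n by simp
        ultimately show "(q *\<^sub>v vec n (\<lambda>i. \<sigma> ^ k * z $ i)) $ i = vec n (\<lambda>i. \<sigma> ^ Suc k * z $ i) $ i"
          unfolding qx[OF c i] using i by (simp add: cm lcm mult.assoc)
      qed (insert qc, simp)
      thus ?case using Suc by simp
    qed
    obtain K where "((\<lambda>x. q *\<^sub>v x) ^^ K) z = 0\<^sub>v n" using nilp_vec[OF qc nq zc] by blast
    hence "vec n (\<lambda>i. \<sigma> ^ K * z $ i) = 0\<^sub>v n" using it by simp
    hence "\<sigma> ^ K * z $ i = 0" if "i < n" for i using that
      by (metis index_vec index_zero_vec(1))
    hence "z $ i = 0" if "i < n" for i using that sig0 by simp
    thus "e *\<^sub>v y = 0\<^sub>v n" using zc unfolding z_def[symmetric] by (intro eq_vecI, auto)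
  qed
  obtain r where r2: "r \<le> 2" and tre: "mtr e = of_nat r" and r0: "r = 0 \<longrightarrow> e = 0\<^sub>m n n"
    using idem_tr[OF cm, of "{0,1}" 2 n e] ec ee K n by auto
  obtain k where qk: "q ^\<^sub>m k = 0\<^sub>m n n" using nq unfolding nilp_def by blast
  have trq: "mtr q = 0" by (rule nil_tr[OF cm qc qk])
  have qii: "q $$ (i,i) = A $$ (i,i) + \<sigma> * e $$ (i,i)" if i: "i < n" for i
    using qx[of "unit_vec n i" i] mv_unit[OF qc i i] mv_unit[OF Ac i i] mv_unit[OF ec i i] i by simp
  have trA: "mtr A = 0"
  proof -
    have "mtr A = (\<Sum>i<n. (if i = 0 then 1 else 0) + (if i = 1 then -1 else (0::'a)))"
      unfolding mtr_def using Ac by (intro sum.cong, auto simp: A_def)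
    also have "\<dots> = 0" using n by (simp add: sum.distrib)
    finally show ?thesis .
  qed
  have "mtr q = mtr A + \<sigma> * mtr e"
    unfolding mtr_def using qc Ac ec qii by (simp add: sum.distrib sum_distrib_left)
  hence "\<sigma> * of_nat r = 0" using trq trA tre by simp
  hence ofr: "(of_nat r :: 'a) = 0" using sig0 by simp
  have r0': "r = 0"
  proof (rule ccontr)
    assume "r \<noteq> 0"
    hence "r = 1 \<or> r = 2" using r2 by auto
    moreover have "(2::'a) \<noteq> 0"
    proof
      assume "(2::'a) = 0"
      hence "(1::'a) + 1 = 0" by simp
      hence "(1::'a) = -1" by (simp add: eq_neg_iff_add_eq_0)
      thus False using c1 by simp
    qed
    ultimately show False using ofr by auto
  qed
  hence e0: "e = 0\<^sub>m n n" using r0 by simp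
  define u0 :: "'a vec" where "u0 = unit_vec n 0"
  have u0c: "u0 \<in> carrier_vec n" unfolding u0_def by simp
  have qu: "q *\<^sub>v u0 = u0"
  proof (rule eq_vecI)
    fix i assume "i < dim_vec u0" hence i: "i < n" unfolding u0_def by simp
    show "(q *\<^sub>v u0) $ i = u0 $ i"
      unfolding qx[OF u0c i] Ax[OF u0c i] e0 using i u0c unfolding u0_def by simp
  qed (insert qc u0c, auto simp: u0_def)
  have "((\<lambda>x. q *\<^sub>v x) ^^ k') u0 = u0" for k' by (induct k', auto simp: qu)
  moreover obtain K where "((\<lambda>x. q *\<^sub>v x) ^^ K) u0 = 0\<^sub>v n" using nilp_vec[OF qc nq u0c] by blast
  ultimately have "u0 = 0\<^sub>v n" by simp
  thus False unfolding u0_def using n by simp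
qed

definition NC :: "nat \<Rightarrow> 'a::ring_1 mat \<Rightarrow> bool" where
  "NC n A \<longleftrightarrow> (\<exists>e q. e \<in> carrier_mat n n \<and> q \<in> carrier_mat n n \<and> e * e = e \<and> nilp n q \<and> A = e + q)"

lemma pow_add_mat:
  assumes N: "(N :: 'a::semiring_1 mat) \<in> carrier_mat n n"
  shows "N ^\<^sub>m (a + b) = N ^\<^sub>m a * N ^\<^sub>m b"
proof (induct b)
  case 0 thus ?case using N by simp
next
  case (Suc b)
  have "N ^\<^sub>m (a + Suc b) = N ^\<^sub>m (a + b) * N" by simp
  also have "\<dots> = N ^\<^sub>m a * N ^\<^sub>m b * N" using Suc by simp
  also have "\<dots> = N ^\<^sub>m a * (N ^\<^sub>m b * N)" using N by (simp add: assoc_mult_mat[of _ n n _ n _ n])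
  finally show ?case by simp
qed

lemma pow_zero_mono:
  assumes N: "(N :: 'a::semiring_1 mat) \<in> carrier_mat n n" and z: "N ^\<^sub>m a = 0\<^sub>m n n" and ab: "a \<le> b"
  shows "N ^\<^sub>m b = 0\<^sub>m n n"
proof -
  obtain d where b: "b = a + d" using ab le_Suc_ex by blast
  show ?thesis unfolding b pow_add_mat[OF N] z using N by simp
qed

lemma NC_sim:
  assumes P: "(P :: 'a::ring_1 mat) \<in> carrier_mat n n" and P': "P' \<in> carrier_mat n n"
    and A: "A \<in> carrier_mat n n" and PP': "P * P' = 1\<^sub>m n" and P'P: "P' * P = 1\<^sub>m n"
    and nc: "NC n (P' * A * P)"
  shows "NC n A"
proof -
  obtain e q where ec: "e \<in> carrier_mat n n" and qc: "q \<in> carrier_mat n n" and ee: "e * e = e"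
    and nq: "nilp n q" and eq: "P' * A * P = e + q" using nc unfolding NC_def by blast
  obtain k where qk: "q ^\<^sub>m k = 0\<^sub>m n n" using nq unfolding nilp_def by blast
  have "A = P * (P' * A * P) * P'"
  proof -
    have "P * (P' * A * P) * P' = (P * P') * A * (P * P')"
      using P P' A by (simp add: assoc_mult_mat[of _ n n _ n _ n])
    thus ?thesis unfolding PP' using A by simp
  qed
  also have "\<dots> = (P * e + P * q) * P'"
    unfolding eq by (subst mult_add_distrib_mat[OF P ec qc], simp)
  also have "\<dots> = P * e * P' + P * q * P'"
    by (rule add_mult_distrib_mat[OF _ _ P'], insert P ec qc, auto)
  finally have Aeq: "A = P * e * P' + P * q * P'" .
  have "(P * e * P') * (P * e * P') = P * e * (P' * P) * e * P'"
    using P P' ec by (simp add: assoc_mult_mat[of _ n n _ n _ n])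
  also have "\<dots> = P * e * P'" unfolding P'P using P P' ec ee by (simp add: assoc_mult_mat[of _ n n _ n _ n])
  finally have idem: "(P * e * P') * (P * e * P') = P * e * P'" .
  have "nilp n (P * q * P')" unfolding nilp_def
    using sim_nilp[OF P' P qc P'P qk] by blast
  thus ?thesis unfolding NC_def using Aeq idem P P' ec qc
    by (intro exI[of _ "P * e * P'"] exI[of _ "P * q * P'"], auto)
qed

lemma NC_block:
  assumes C: "(C :: 'a::ring_1 mat) \<in> carrier_mat k k" and X: "X \<in> carrier_mat k l" and B: "B \<in> carrier_mat l l"
    and nC: "NC k C" and nB: "NC l B"
  shows "NC (k + l) (four_block_mat C X (0\<^sub>m l k) B)"
proof -
  obtain e1 q1 where e1: "e1 \<in> carrier_mat k k" and q1: "q1 \<in> carrier_mat k k" and ee1: "e1 * e1 = e1"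
    and n1: "nilp k q1" and C1: "C = e1 + q1" using nC unfolding NC_def by blast
  obtain e2 q2 where e2: "e2 \<in> carrier_mat l l" and q2: "q2 \<in> carrier_mat l l" and ee2: "e2 * e2 = e2"
    and n2: "nilp l q2" and B2: "B = e2 + q2" using nB unfolding NC_def by blast
  obtain j1 where j1: "q1 ^\<^sub>m j1 = 0\<^sub>m k k" using n1 unfolding nilp_def by blast
  obtain j2 where j2: "q2 ^\<^sub>m j2 = 0\<^sub>m l l" using n2 unfolding nilp_def by blast
  define e where "e = four_block_mat e1 (0\<^sub>m k l) (0\<^sub>m l k) e2"
  define q where "q = four_block_mat q1 X (0\<^sub>m l k) q2"
  have ec: "e \<in> carrier_mat (k + l) (k + l)" unfolding e_def using e1 e2 by simp
  have qc: "q \<in> carrier_mat (k + l) (k + l)" unfolding q_def using q1 q2 by simp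
  have "e * e = four_block_mat (e1 * e1 + 0\<^sub>m k l * 0\<^sub>m l k) (e1 * 0\<^sub>m k l + 0\<^sub>m k l * e2)
      (0\<^sub>m l k * e1 + e2 * 0\<^sub>m l k) (0\<^sub>m l k * 0\<^sub>m k l + e2 * e2)"
    unfolding e_def by (rule mult_four_block_mat, insert e1 e2, auto)
  also have "\<dots> = e" unfolding e_def ee1 ee2 using e1 e2 by simp
  finally have ee: "e * e = e" .
  have sum: "four_block_mat C X (0\<^sub>m l k) B = e + q"
    unfolding e_def q_def C1 B2
    by (subst add_four_block_mat[of _ k k _ l _ l], insert e1 e2 q1 q2 X, auto)
  define j where "j = max j1 j2"
  have a: "q1 ^\<^sub>m j = 0\<^sub>m k k" by (rule pow_zero_mono[OF q1 j1], simp add: j_def)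
  have b: "q2 ^\<^sub>m j = 0\<^sub>m l l" by (rule pow_zero_mono[OF q2 j2], simp add: j_def)
  obtain y where y: "y \<in> carrier_mat k l" and qj: "q ^\<^sub>m j = four_block_mat (q1 ^\<^sub>m j) y (0\<^sub>m l k) (q2 ^\<^sub>m j)"
    using blk_pow[OF q1 X q2, of j] unfolding q_def by blast
  have "q ^\<^sub>m (j + j) = q ^\<^sub>m j * q ^\<^sub>m j" by (rule pow_add_mat[OF qc])
  also have "\<dots> = four_block_mat (0\<^sub>m k k) y (0\<^sub>m l k) (0\<^sub>m l l) * four_block_mat (0\<^sub>m k k) y (0\<^sub>m l k) (0\<^sub>m l l)"
    unfolding qj a b ..
  also have "\<dots> = four_block_mat (0\<^sub>m k k * 0\<^sub>m k k + y * 0\<^sub>m l k) (0\<^sub>m k k * y + y * 0\<^sub>m l l)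
      (0\<^sub>m l k * 0\<^sub>m k k + 0\<^sub>m l l * 0\<^sub>m l k) (0\<^sub>m l k * y + 0\<^sub>m l l * 0\<^sub>m l l)"
    by (rule mult_four_block_mat, insert y, auto)
  also have "\<dots> = 0\<^sub>m (k + l) (k + l)" using y by (intro eq_matI, auto)
  finally have "nilp (k + l) q" unfolding nilp_def by blast
  thus ?thesis unfolding NC_def using ec qc ee sum by blast
qed

lemma shift_pow:
  fixes k :: nat
  defines "S \<equiv> mat k k (\<lambda>(i,j). if i = j + 1 then 1 else (0::'a::semiring_1))"
  shows "i < k \<Longrightarrow> j < k \<Longrightarrow> (S ^\<^sub>m m) $$ (i,j) = (if i = j + m then 1 else 0)"
proof (induct m arbitrary: i j)
  case 0 thus ?case unfolding S_def by simp
next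
  case (Suc m)
  have Sc: "S \<in> carrier_mat k k" unfolding S_def by simp
  have "(S ^\<^sub>m Suc m) $$ (i,j) = (\<Sum>l<k. (S ^\<^sub>m m) $$ (i,l) * S $$ (l,j))"
    using Suc.prems Sc by (simp add: scalar_prod_def lessThan_atLeast0)
  also have "\<dots> = (\<Sum>l<k. if l = j + 1 then (if i = j + 1 + m then 1 else 0) else 0)"
    by (rule sum.cong, simp, insert Suc, auto simp: S_def)
  also have "\<dots> = (if i = j + Suc m then 1 else 0)" using Suc.prems by auto
  finally show ?case .
qed

lemma shift_nilp:
  fixes k :: nat
  defines "S \<equiv> mat k k (\<lambda>(i,j). if i = j + 1 then 1 else (0::'a::semiring_1))"
  shows "S ^\<^sub>m k = 0\<^sub>m k k"
proof (rule eq_matI)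
  fix i j assume "i < dim_row (0\<^sub>m k k :: 'a mat)" "j < dim_col (0\<^sub>m k k :: 'a mat)"
  hence i: "i < k" and j: "j < k" by auto
  show "(S ^\<^sub>m k) $$ (i,j) = (0\<^sub>m k k :: 'a mat) $$ (i,j)"
    using shift_pow[of i k j k] i j unfolding S_def by simp
qed (auto simp: S_def)

lemma funpow_add_vec:
  assumes q: "(q :: 'a::semiring_0 mat) \<in> carrier_mat n n" and x: "x \<in> carrier_vec n" and y: "y \<in> carrier_vec n"
  shows "((\<lambda>v. q *\<^sub>v v) ^^ m) (x + y) = ((\<lambda>v. q *\<^sub>v v) ^^ m) x + ((\<lambda>v. q *\<^sub>v v) ^^ m) y"
proof (induct m)
  case 0 thus ?case by simp
next
  case (Suc m)
  have cx: "((\<lambda>v. q *\<^sub>v v) ^^ m) x \<in> carrier_vec n" by (rule funpow_carrier[OF q x])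
  have cy: "((\<lambda>v. q *\<^sub>v v) ^^ m) y \<in> carrier_vec n" by (rule funpow_carrier[OF q y])
  show ?case using Suc mult_add_distrib_mat_vec[OF q cx cy] by simp
qed

lemma funpow_zero_vec:
  assumes q: "(q :: 'a::semiring_0 mat) \<in> carrier_mat n n"
  shows "((\<lambda>v. q *\<^sub>v v) ^^ m) (0\<^sub>v n) = 0\<^sub>v n"
  by (induct m, insert q, auto)

lemma chain_nilp:
  assumes q: "(q :: 'a::ring_1 mat) \<in> carrier_mat k k"
    and z: "((\<lambda>v. q *\<^sub>v v) ^^ k) (unit_vec k 0) = 0\<^sub>v k"
    and gen: "\<And>j. j < k \<Longrightarrow> ((\<lambda>v. q *\<^sub>v v) ^^ k) (unit_vec k j) = 0\<^sub>v k"
  shows "nilp k q"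
proof -
  have "q ^\<^sub>m k = 0\<^sub>m k k"
  proof (rule mat_eq_by_mv[of _ k k])
    fix j assume j: "j < k"
    have "q ^\<^sub>m k *\<^sub>v unit_vec k j = ((\<lambda>v. q *\<^sub>v v) ^^ k) (unit_vec k j)"
      by (rule powv[OF q], simp)
    also have "\<dots> = 0\<^sub>v k" by (rule gen[OF j])
    finally show "q ^\<^sub>m k *\<^sub>v unit_vec k j = 0\<^sub>m k k *\<^sub>v unit_vec k j" by simp
  qed (insert q, auto)
  thus ?thesis unfolding nilp_def by blast
qed

lemma companion_NC:
  assumes H2: "\<forall>x::'a::ring_1. x = 0 \<or> x = 1" and c2: "(1::'a) + 1 = 0"
    and C: "(C :: 'a mat) \<in> carrier_mat k k" and k: "k \<ge> 1"
    and Cs: "\<And>i j. i < k \<Longrightarrow> j + 1 < k \<Longrightarrow> C $$ (i,j) = (if i = j + 1 then 1 else 0)"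
  shows "NC k C"
proof -
  have xx: "\<And>x::'a. x + x = 0" using H2 c2 by (metis add.right_neutral)
  define L where "L = k - 1"
  have kL: "k = Suc L" unfolding L_def using k by simp
  define S :: "'a mat" where "S = mat k k (\<lambda>(i,j). if i = j + 1 then 1 else 0)"
  have Sc: "S \<in> carrier_mat k k" unfolding S_def by simp
  have nS: "nilp k S" unfolding nilp_def S_def using shift_nilp by blast
  have CL: "C $$ (L,L) = 0 \<or> C $$ (L,L) = 1" using H2 by blast
  moreover
  { assume C1: "C $$ (L,L) = 1"
    define e where "e = mat k k (\<lambda>(i,j). if j = L then C $$ (i,L) else 0)"
    have ec: "e \<in> carrier_mat k k" unfolding e_def by simp
    have sum: "C = e + S"
    proof (rule eq_matI)
      fix i j assume "i < dim_row (e + S)" "j < dim_col (e + S)"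
      hence i: "i < k" and j: "j < k" using ec Sc by auto
      show "C $$ (i,j) = (e + S) $$ (i,j)"
      proof (cases "j = L")
        case True thus ?thesis using i j kL unfolding e_def S_def by auto
      next
        case False
        hence "j + 1 < k" using j kL by auto
        thus ?thesis using Cs[OF i] i j False unfolding e_def S_def by auto
      qed
    qed (insert C ec Sc, auto)
    have ee: "e * e = e"
    proof (rule eq_matI)
      fix i j assume "i < dim_row e" "j < dim_col e"
      hence i: "i < k" and j: "j < k" using ec by auto
      have "(e * e) $$ (i,j) = (\<Sum>l<k. e $$ (i,l) * e $$ (l,j))"
        using ec i j by (simp add: scalar_prod_def lessThan_atLeast0)
      also have "\<dots> = (\<Sum>l<k. if l = L then C $$ (i,L) * e $$ (L,j) else 0)"
        by (rule sum.cong, simp, insert i, auto simp: e_def)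
      also have "\<dots> = C $$ (i,L) * e $$ (L,j)" using kL by simp
      also have "\<dots> = e $$ (i,j)" using i j kL C1 unfolding e_def by auto
      finally show "(e * e) $$ (i,j) = e $$ (i,j)" .
    qed (insert ec, auto)
    have "NC k C" unfolding NC_def using ec Sc ee nS sum by blast }
  moreover
  { assume C0: "C $$ (L,L) = 0"
    have "NC k C"
    proof (cases "L = 0 \<or> (L = 1 \<and> C $$ (0,1) = 0)")
      case True
      have "C = S"
      proof (rule eq_matI)
        fix i j assume "i < dim_row S" "j < dim_col S"
        hence i: "i < k" and j: "j < k" using Sc by auto
        show "C $$ (i,j) = S $$ (i,j)"
        proof (cases "j + 1 < k")
          case True thus ?thesis using Cs[OF i True] i j unfolding S_def by simp
        next
          case False
          hence jL: "j = L" using j kL by auto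
          show ?thesis using \<open>L = 0 \<or> (L = 1 \<and> C $$ (0,1) = 0)\<close> i jL kL C0 unfolding S_def
            by (auto simp: less_Suc_eq)
        qed
      qed (insert C Sc, auto)
      have z: "0\<^sub>m k k * 0\<^sub>m k k = (0\<^sub>m k k :: 'a mat)" by simp
      show ?thesis unfolding NC_def \<open>C = S\<close> using Sc nS z
        by (intro exI[of _ "0\<^sub>m k k"] exI[of _ S], auto)
    next
      case False
      hence L1: "L \<ge> 1" and L2: "L = 1 \<Longrightarrow> C $$ (0,1) = 1" using H2 by auto
      define \<gamma> :: 'a where "\<gamma> = (if C $$ (L - 1, L) = 1 then 0 else 1)"
      have g2: "L < 2 \<Longrightarrow> \<gamma> = 0" using L1 L2 unfolding \<gamma>_def by (cases "L = 1", auto)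
      have gC: "C $$ (L - 1, L) + 1 + \<gamma> = 0"
      proof -
        have "C $$ (L - 1, L) = 0 \<or> C $$ (L - 1, L) = 1" using H2 by blast
        thus ?thesis unfolding \<gamma>_def using c2 by auto
      qed
      define e where "e = mat k k (\<lambda>(i,j).
        if j = L - 1 then (if i = L - 1 then 1 else if i + 2 = L then \<gamma> else 0)
        else if j = L then (if i = L then 1 else if i + 1 < L then C $$ (i,L) + (if i + 2 = L then \<gamma> else 0) else 0)
        else 0)"
      have ec: "e \<in> carrier_mat k k" unfolding e_def by simp
      define q where "q = C + e"
      have qc: "q \<in> carrier_mat k k" unfolding q_def using C ec by simp
      have bab: "\<And>a b::'a. b + (a + b) = a" by (metis add.left_commute xx add_0_right)
      have sum: "C = e + q"
        by (rule eq_matI, insert C ec, auto simp: q_def bab)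
      have eent: "i < k \<Longrightarrow> j < k \<Longrightarrow> e $$ (i,j) = (if j = L - 1 then (if i = L - 1 then 1 else if i + 2 = L then \<gamma> else 0)
        else if j = L then (if i = L then 1 else if i + 1 < L then C $$ (i,L) + (if i + 2 = L then \<gamma> else 0) else 0)
        else 0)" for i j unfolding e_def by simp
      have ee: "e * e = e"
      proof (rule eq_matI)
        fix i j assume "i < dim_row e" "j < dim_col e"
        hence i: "i < k" and j: "j < k" using ec by auto
        have "(e * e) $$ (i,j) = (\<Sum>l<k. e $$ (i,l) * e $$ (l,j))"
          using ec i j by (simp add: scalar_prod_def lessThan_atLeast0)
        also have "\<dots> = (\<Sum>l<k. if l = j \<and> (j = L - 1 \<or> j = L) then e $$ (i,j) else 0)"
        proof (rule sum.cong)
          fix l assume "l \<in> {..<k}" hence l: "l < k" by simp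
          show "e $$ (i,l) * e $$ (l,j) = (if l = j \<and> (j = L - 1 \<or> j = L) then e $$ (i,j) else 0)"
            unfolding eent[OF i l] eent[OF l j] eent[OF i j] using L1 kL l j by auto
        qed simp
        also have "\<dots> = e $$ (i,j)" using j kL L1 unfolding eent[OF i j] by auto
        finally show "(e * e) $$ (i,j) = e $$ (i,j)" .
      qed (insert ec, auto)
      have qent: "i < k \<Longrightarrow> j < k \<Longrightarrow> q $$ (i,j) = C $$ (i,j) + e $$ (i,j)" for i j
        unfolding q_def using C ec by simp
      let ?f = "\<lambda>v. q *\<^sub>v v"
      let ?u = "\<lambda>j. unit_vec k j :: 'a vec"
      have step: "j + 1 < L \<Longrightarrow> q *\<^sub>v ?u j = ?u (j + 1)" for j
      proof (rule eq_vecI)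
        fix i assume jL: "j + 1 < L" and "i < dim_vec (?u (j + 1))"
        hence i: "i < k" by simp
        have j: "j < k" "j + 1 < k" using jL kL by auto
        have "e $$ (i,j) = 0" unfolding eent[OF i j(1)] using jL by auto
        hence "q $$ (i,j) = (if i = j + 1 then 1 else 0)"
          unfolding qent[OF i j(1)] Cs[OF i j(2)] by simp
        moreover have "?u (j + 1) $ i = (if i = j + 1 then 1 else 0)" using i by simp
        ultimately show "(q *\<^sub>v ?u j) $ i = ?u (j + 1) $ i"
          unfolding mv_unit[OF qc j(1) i] by simp
      qed (insert qc, simp)
      have chain: "j \<le> L - 1 \<Longrightarrow> (?f ^^ j) (?u 0) = ?u j" for j
      proof (induct j)
        case 0 thus ?case by simp
      next
        case (Suc j)
        hence "j + 1 < L" using L1 by auto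
        thus ?case using Suc step by simp
      qed
      define p where "p = q *\<^sub>v ?u (L - 1)"
      have pc: "p \<in> carrier_vec k" unfolding p_def using qc by simp
      have pL: "(?f ^^ L) (?u 0) = p"
      proof -
        have "L = Suc (L - 1)" using L1 by simp
        hence "(?f ^^ L) (?u 0) = ?f ((?f ^^ (L - 1)) (?u 0))" by (metis funpow.simps(2) comp_apply)
        thus ?thesis using chain[of "L - 1"] unfolding p_def by simp
      qed
      have pent: "l < k \<Longrightarrow> p $ l = (if l = L then 1 else 0) + (if l = L - 1 then 1 else 0) + (if l + 2 = L then \<gamma> else 0)" for l
      proof -
        assume l: "l < k"
        have Lk: "L - 1 < k" using kL by simp
        have "p $ l = C $$ (l, L - 1) + e $$ (l, L - 1)"
          unfolding p_def mv_unit[OF qc Lk l] qent[OF l Lk] by simp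
        also have "C $$ (l, L - 1) = (if l = L then 1 else 0)" using Cs[OF l, of "L - 1"] kL L1 by auto
        also have "e $$ (l, L - 1) = (if l = L - 1 then 1 else 0) + (if l + 2 = L then \<gamma> else 0)"
          unfolding eent[OF l Lk] using L1 by auto
        finally show ?thesis by (simp add: add.assoc)
      qed
      have qp: "q *\<^sub>v p = 0\<^sub>v k"
      proof (rule eq_vecI)
        fix i assume "i < dim_vec (0\<^sub>v k :: 'a vec)"
        hence i: "i < k" by simp
        have Lk: "L < k" "L - 1 < k" using kL by auto
        have "(q *\<^sub>v p) $ i = (\<Sum>l<k. q $$ (i,l) * p $ l)"
          using qc pc i by (simp add: scalar_prod_def lessThan_atLeast0)
        also have "\<dots> = (\<Sum>l<k. (if l = L then q $$ (i,L) else 0) + (if l = L - 1 then q $$ (i, L - 1) else 0)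
                       + (if l + 2 = L then q $$ (i, L - 2) * \<gamma> else 0))"
        proof (rule sum.cong)
          fix l assume "l \<in> {..<k}" hence l: "l < k" by simp
          show "q $$ (i,l) * p $ l = (if l = L then q $$ (i,L) else 0) + (if l = L - 1 then q $$ (i, L - 1) else 0)
                       + (if l + 2 = L then q $$ (i, L - 2) * \<gamma> else 0)"
            unfolding pent[OF l] using L1 by (auto simp: distrib_left)
        qed simp
        also have "\<dots> = q $$ (i,L) + q $$ (i, L - 1) + (if 2 \<le> L then q $$ (i, L - 2) * \<gamma> else 0)"
        proof -
          have a: "(\<Sum>l<k. if l + 2 = L then q $$ (i, L - 2) * \<gamma> else 0) = (if 2 \<le> L then q $$ (i, L - 2) * \<gamma> else 0)"
          proof (cases "2 \<le> L")
            case True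
            have "(\<Sum>l<k. if l + 2 = L then q $$ (i, L - 2) * \<gamma> else 0) = (\<Sum>l<k. if l = L - 2 then q $$ (i, L - 2) * \<gamma> else 0)"
              by (rule sum.cong, insert True, auto)
            moreover have "L - 2 < k" using kL by simp
            ultimately show ?thesis using True by simp
          qed auto
          show ?thesis unfolding sum.distrib a using Lk by simp
        qed
        also have "\<dots> = 0"
        proof -
          have qL: "q $$ (i,L) = C $$ (i,L) + (if i = L then 1 else if i + 1 < L then C $$ (i,L) + (if i + 2 = L then \<gamma> else 0) else 0)"
            unfolding qent[OF i Lk(1)] eent[OF i Lk(1)] using L1 by auto
          have qL1: "q $$ (i,L - 1) = (if i = L then 1 else 0) + ((if i = L - 1 then 1 else 0) + (if i + 2 = L then \<gamma> else 0))"
            unfolding qent[OF i Lk(2)] eent[OF i Lk(2)] using Cs[OF i, of "L - 1"] kL L1 by auto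
          have qL2: "2 \<le> L \<Longrightarrow> q $$ (i,L - 2) = (if i = L - 1 then 1 else 0)"
          proof -
            assume L2': "2 \<le> L"
            have a: "L - 2 < k" "L - 2 + 1 < k" using kL L2' by auto
            show ?thesis unfolding qent[OF i a(1)] eent[OF i a(1)] Cs[OF i a(2)] using L2' by auto
          qed
          have g01: "\<gamma> = 0 \<or> \<gamma> = 1" unfolding \<gamma>_def by auto
          show ?thesis
          proof (cases "i = L")
            case True
            thus ?thesis using qL qL1 qL2 C0 L1 xx g01 by (auto simp: g2)
          next
            case False
            note iL = False
            show ?thesis
            proof (cases "i = L - 1")
              case True
              have "C $$ (L - 1, L) + 1 + \<gamma> = 0" by (rule gC)
              thus ?thesis using qL qL1 qL2 True iL L1 xx g01 g2
                by (cases "2 \<le> L", auto simp: add.assoc add.left_commute)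
            next
              case False
              have "i < L - 1" using i kL iL False by auto
              thus ?thesis using qL qL1 qL2 iL False L1 xx g01 g2
                by (cases "i + 2 = L"; cases "2 \<le> L"; auto simp: add.assoc add.left_commute)
            qed
          qed
        qed
        finally show "(q *\<^sub>v p) $ i = 0\<^sub>v k $ i" using i by simp
      qed (insert qc, simp)
      have z: "(?f ^^ k) (?u 0) = 0\<^sub>v k"
      proof -
        have "(?f ^^ k) (?u 0) = ?f ((?f ^^ L) (?u 0))" unfolding kL by simp
        thus ?thesis unfolding pL qp by simp
      qed
      have comm: "(?f ^^ k) ((?f ^^ j) x) = (?f ^^ j) ((?f ^^ k) x)" for j x
        by (metis funpow_add add.commute comp_apply)
      have gen: "(?f ^^ k) (?u j) = 0\<^sub>v k" if j: "j < k" for j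
      proof (cases "j \<le> L - 1")
        case True
        show ?thesis using comm[of j "?u 0"] chain[OF True] z funpow_zero_vec[OF qc] by simp
      next
        case False
        hence jL: "j = L" using j kL by auto
        have pz: "(?f ^^ k) p = 0\<^sub>v k" using comm[of L "?u 0"] pL z funpow_zero_vec[OF qc] by simp
        have u1z: "(?f ^^ k) (?u (L - 1)) = 0\<^sub>v k"
          using comm[of "L - 1" "?u 0"] chain[of "L - 1"] z funpow_zero_vec[OF qc] by simp
        show ?thesis
        proof (cases "2 \<le> L \<and> \<gamma> = 1")
          case True
          have uL: "?u L = p + ?u (L - 1) + ?u (L - 2)"
          proof (rule eq_vecI)
            fix l assume "l < dim_vec (p + ?u (L - 1) + ?u (L - 2))"
            hence l: "l < k" using pc by simp
            show "?u L $ l = (p + ?u (L - 1) + ?u (L - 2)) $ l"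
              using l pc True xx L1 by (auto simp: pent[OF l] add.assoc)
          qed (insert pc, simp)
          have u2z: "(?f ^^ k) (?u (L - 2)) = 0\<^sub>v k"
            using comm[of "L - 2" "?u 0"] chain[of "L - 2"] z funpow_zero_vec[OF qc] True by simp
          show ?thesis unfolding jL uL
            using funpow_add_vec[OF qc, of "p + ?u (L - 1)" "?u (L - 2)" k]
              funpow_add_vec[OF qc pc, of "?u (L - 1)" k] pz u1z u2z pc by simp
        next
          case False
          have g0: "\<gamma> = 0"
          proof (cases "2 \<le> L")
            case True
            hence "\<gamma> \<noteq> 1" using False by auto
            thus ?thesis unfolding \<gamma>_def by (auto split: if_splits)
          next
            case False thus ?thesis using g2 by auto
          qed
          have uL: "?u L = p + ?u (L - 1)"
          proof (rule eq_vecI)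
            fix l assume "l < dim_vec (p + ?u (L - 1))"
            hence l: "l < k" using pc by simp
            show "?u L $ l = (p + ?u (L - 1)) $ l"
              using l pc g0 xx L1 by (auto simp: pent[OF l] add.assoc)
          qed (insert pc, simp)
          show ?thesis unfolding jL uL
            using funpow_add_vec[OF qc pc, of "?u (L - 1)" k] pz u1z by simp
        qed
      qed
      have "nilp k q" by (rule chain_nilp[OF qc z gen])
      thus ?thesis unfolding NC_def using ec qc ee sum by blast
    qed }
  ultimately show ?thesis by blast
qed

lemma tv_unit_other:
  assumes w: "w \<in> carrier_vec n" and i: "i < n" and j: "j < n" and ji: "j \<noteq> i"
  shows "tv n w i *\<^sub>v unit_vec n j = unit_vec n j"
  unfolding tv_mv[OF w unit_vec_carrier i] using ji j i by (intro eq_vecI, auto)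

lemma tv_conj_mv:
  assumes A: "(A :: 'a::ring_1 mat) \<in> carrier_mat n n" and w: "w \<in> carrier_vec n" and y: "y \<in> carrier_vec n"
  shows "(tv n (- w) i * A * tv n w i) *\<^sub>v y = tv n (- w) i *\<^sub>v (A *\<^sub>v (tv n w i *\<^sub>v y))"
proof -
  have c: "tv n w i *\<^sub>v y \<in> carrier_vec n" by (rule mult_mat_vec_carrier[OF tv_carrier y])
  have "(tv n (- w) i * A * tv n w i) *\<^sub>v y = (tv n (- w) i * A) *\<^sub>v (tv n w i *\<^sub>v y)"
    by (rule assoc_mult_mat_vec[of _ n n _ n], insert A y, auto)
  also have "\<dots> = tv n (- w) i *\<^sub>v (A *\<^sub>v (tv n w i *\<^sub>v y))"
    by (rule assoc_mult_mat_vec[of _ n n _ n], insert A c, auto)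
  finally show ?thesis .
qed

definition cond_k :: "nat \<Rightarrow> nat \<Rightarrow> 'a::ring_1 mat \<Rightarrow> bool" where
  "cond_k n k A \<longleftrightarrow> (\<forall>j. j + 1 < k \<longrightarrow> A *\<^sub>v unit_vec n j = unit_vec n (j + 1))"

lemma tv_conj_step:
  assumes A: "(A :: 'a::ring_1 mat) \<in> carrier_mat n n" and w: "w \<in> carrier_vec n"
    and i: "i < n" and wi: "w $ i = 0" and c: "cond_k n k A" and ki: "k \<le> i"
    and nc: "NC n (tv n (- w) i * A * tv n w i)"
  shows "NC n A"
  using NC_sim[OF tv_carrier tv_carrier A tv_inv[OF w i wi] _ nc]
    tv_inv[of "- w" n i] w wi i by simp

lemma blk_case:
  assumes H2: "\<forall>x::'a::ring_1. x = 0 \<or> x = 1" and c2: "(1::'a) + 1 = 0"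
    and A: "(A :: 'a mat) \<in> carrier_mat n n" and k1: "1 \<le> k" and kn: "k \<le> n"
    and c: "cond_k n k A" and z: "\<And>i. k \<le> i \<Longrightarrow> i < n \<Longrightarrow> (A *\<^sub>v unit_vec n (k - 1)) $ i = 0"
    and IH: "\<And>B :: 'a mat. B \<in> carrier_mat (n - k) (n - k) \<Longrightarrow> NC (n - k) B"
  shows "NC n A"
proof -
  obtain A1 A2 A3 A4 where sb: "split_block A k k = (A1, A2, A3, A4)" by (metis prod_cases4)
  have dims: "dim_row A = k + (n - k)" "dim_col A = k + (n - k)" using A kn by auto
  note spl = split_block[OF sb dims]
  have Aent: "i < n \<Longrightarrow> j < n \<Longrightarrow> A $$ (i,j) = (A *\<^sub>v unit_vec n j) $ i" for i j
    using mv_unit[OF A] by simp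
  have A3: "A3 = 0\<^sub>m (n - k) k"
  proof (rule eq_matI)
    fix i j assume ij: "i < dim_row (0\<^sub>m (n - k) k :: 'a mat)" "j < dim_col (0\<^sub>m (n - k) k :: 'a mat)"
    hence i: "i < n - k" and j: "j < k" by auto
    have "A3 $$ (i,j) = A $$ (i + k, j)" using sb dims i j unfolding split_block_def Let_def by auto
    also have "\<dots> = (A *\<^sub>v unit_vec n j) $ (i + k)" using Aent i j kn by auto
    also have "\<dots> = 0"
    proof (cases "j + 1 < k")
      case True thus ?thesis using c i unfolding cond_k_def by auto
    next
      case False
      hence "j = k - 1" using j by auto
      thus ?thesis using z[of "i + k"] i by auto
    qed
    finally show "A3 $$ (i,j) = 0\<^sub>m (n - k) k $$ (i,j)" using i j by simp
  qed (insert spl(3), auto)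
  have A1: "NC k A1"
  proof (rule companion_NC[OF H2 c2 spl(1) k1])
    fix i j assume i: "i < k" and j: "j + 1 < k"
    have "A1 $$ (i,j) = A $$ (i,j)" using sb dims i j unfolding split_block_def Let_def by auto
    also have "\<dots> = (A *\<^sub>v unit_vec n j) $ i" using Aent i j kn by auto
    also have "\<dots> = (if i = j + 1 then 1 else 0)" using c j i kn unfolding cond_k_def by auto
    finally show "A1 $$ (i,j) = (if i = j + 1 then 1 else 0)" .
  qed
  have A4: "NC (n - k) A4" by (rule IH[OF spl(4)])
  have "NC (k + (n - k)) (four_block_mat A1 A2 (0\<^sub>m (n - k) k) A4)"
    by (rule NC_block[OF spl(1) spl(2) spl(4) A1 A4])
  thus ?thesis using spl(5) A3 kn by simp
qed

lemma adv_case: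
  assumes H2: "\<forall>x::'a::ring_1. x = 0 \<or> x = 1" and c2: "(1::'a) + 1 = 0"
    and A: "(A :: 'a mat) \<in> carrier_mat n n" and k1: "1 \<le> k" and kn: "k < n"
    and c: "cond_k n k A" and nz: "i0 \<ge> k" "i0 < n" "(A *\<^sub>v unit_vec n (k - 1)) $ i0 \<noteq> 0"
  shows "\<exists>A' :: 'a mat. A' \<in> carrier_mat n n \<and> cond_k n (Suc k) A' \<and> (NC n A' \<longrightarrow> NC n A)"
proof -
  have m1: "-1 = (1::'a)" using c2 by (metis add_eq_0_iff)
  have nz1: "\<And>x::'a. x \<noteq> 0 \<Longrightarrow> x = 1" using H2 by blast
  let ?u = "\<lambda>j. unit_vec n j :: 'a vec"
  obtain A1 where A1: "A1 \<in> carrier_mat n n" and c1: "cond_k n k A1"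
    and v1: "(A1 *\<^sub>v ?u (k - 1)) $ k = 1" and imp1: "NC n A1 \<Longrightarrow> NC n A"
  proof (cases "(A *\<^sub>v ?u (k - 1)) $ k = 0")
    case False
    thus ?thesis using that[OF A c] nz1 by blast
  next
    case True
    hence ik: "i0 \<noteq> k" using nz by auto
    define w where "w = ?u k"
    have wc: "w \<in> carrier_vec n" unfolding w_def by simp
    have wi: "w $ i0 = 0" unfolding w_def using ik nz kn by simp
    have mwc: "- w \<in> carrier_vec n" using wc by simp
    define A1 where "A1 = tv n (- w) i0 * A * tv n w i0"
    have A1c: "A1 \<in> carrier_mat n n" unfolding A1_def using A by simp
    have col: "A1 *\<^sub>v ?u j = tv n (- w) i0 *\<^sub>v (A *\<^sub>v ?u j)" if j: "j < k" for j
    proof -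
      have "j \<noteq> i0" using j nz by auto
      thus ?thesis unfolding A1_def tv_conj_mv[OF A wc unit_vec_carrier]
        using tv_unit_other[OF wc nz(2), of j] j kn by simp
    qed
    have c1: "cond_k n k A1" unfolding cond_k_def
    proof (intro allI impI)
      fix j assume j: "j + 1 < k"
      have "A1 *\<^sub>v ?u j = tv n (- w) i0 *\<^sub>v ?u (j + 1)" using col[of j] j c unfolding cond_k_def by simp
      also have "\<dots> = ?u (j + 1)" by (rule tv_unit_other[OF mwc nz(2)], insert j kn nz, auto)
      finally show "A1 *\<^sub>v ?u j = ?u (j + 1)" .
    qed
    have "(A1 *\<^sub>v ?u (k - 1)) $ k = (tv n (- w) i0 *\<^sub>v (A *\<^sub>v ?u (k - 1))) $ k" using col[of "k - 1"] k1 by simp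
    also have "\<dots> = (A *\<^sub>v ?u (k - 1)) $ k + (- w) $ k * (A *\<^sub>v ?u (k - 1)) $ i0"
      unfolding tv_mv[OF mwc mult_mat_vec_carrier[OF A unit_vec_carrier] nz(2)] using kn by simp
    also have "\<dots> = 1" using True nz1[OF nz(3)] kn m1 unfolding w_def by simp
    finally have v1: "(A1 *\<^sub>v ?u (k - 1)) $ k = 1" .
    have "NC n A1 \<Longrightarrow> NC n A" unfolding A1_def by (rule tv_conj_step[OF A wc nz(2) wi c nz(1)])
    thus ?thesis using that[OF A1c c1 v1] by blast
  qed
  define v where "v = A1 *\<^sub>v ?u (k - 1)"
  have vc: "v \<in> carrier_vec n" unfolding v_def using A1 by simp
  define w where "w = v - ?u k"
  have wc: "w \<in> carrier_vec n" unfolding w_def using vc by simp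
  have mwc: "- w \<in> carrier_vec n" using wc by simp
  have wk: "w $ k = 0" unfolding w_def using v1 kn vc unfolding v_def by simp
  define A2 where "A2 = tv n (- w) k * A1 * tv n w k"
  have A2c: "A2 \<in> carrier_mat n n" unfolding A2_def using A1 by simp
  have col: "A2 *\<^sub>v ?u j = tv n (- w) k *\<^sub>v (A1 *\<^sub>v ?u j)" if j: "j < k" for j
    unfolding A2_def tv_conj_mv[OF A1 wc unit_vec_carrier]
    using tv_unit_other[OF wc kn, of j] j kn by simp
  have c2': "cond_k n (Suc k) A2" unfolding cond_k_def
  proof (intro allI impI)
    fix j assume j: "j + 1 < Suc k"
    show "A2 *\<^sub>v ?u j = ?u (j + 1)"
    proof (cases "j + 1 < k")
      case True
      have "A2 *\<^sub>v ?u j = tv n (- w) k *\<^sub>v ?u (j + 1)" using col[of j] True c1 unfolding cond_k_def by simp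
      also have "\<dots> = ?u (j + 1)" by (rule tv_unit_other[OF mwc kn], insert True kn, auto)
      finally show ?thesis .
    next
      case False
      hence jk: "j = k - 1" and jk': "j + 1 = k" using j k1 by auto
      have "A2 *\<^sub>v ?u j = tv n (- w) k *\<^sub>v v" using col[of j] jk k1 unfolding v_def by simp
      also have "\<dots> = vec n (\<lambda>a. v $ a + (- w) $ a * v $ k)" by (rule tv_mv[OF mwc vc kn])
      also have "\<dots> = ?u k" using v1 vc wc unfolding v_def[symmetric] w_def by (intro eq_vecI, auto)
      finally show ?thesis unfolding jk' .
    qed
  qed
  have "NC n A2 \<Longrightarrow> NC n A1" unfolding A2_def
    by (rule tv_conj_step[OF A1 wc kn wk c1 order.refl])
  thus ?thesis using A2c c2' imp1 by blast
qed

lemma F2_NC: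
  assumes H2: "\<forall>x::'a::ring_1. x = 0 \<or> x = 1" and c2: "(1::'a) + 1 = 0"
  shows "(A :: 'a mat) \<in> carrier_mat n n \<Longrightarrow> NC n A"
proof (induct n arbitrary: A rule: less_induct)
  case (less n A)
  show ?case
  proof (cases "n = 0")
    case True
    have A0: "A = 0\<^sub>m 0 0 + 0\<^sub>m 0 0" using less.prems True by (intro eq_matI, auto)
    have n0: "nilp 0 (0\<^sub>m 0 0 :: 'a mat)" unfolding nilp_def by (rule exI[of _ 0], rule eq_matI, auto)
    have z: "(0\<^sub>m 0 0 :: 'a mat) * 0\<^sub>m 0 0 = 0\<^sub>m 0 0" by (rule eq_matI, auto)
    have "NC 0 A" unfolding NC_def
      by (rule exI[of _ "0\<^sub>m 0 0"], rule exI[of _ "0\<^sub>m 0 0"], intro conjI, auto simp: z n0 A0[symmetric])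
    thus ?thesis using True by simp
  next
    case False
    have key: "\<forall>k (A :: 'a mat). n - k = d \<longrightarrow> 1 \<le> k \<longrightarrow> k \<le> n \<longrightarrow> A \<in> carrier_mat n n \<longrightarrow> cond_k n k A \<longrightarrow> NC n A" for d
    proof (induct d)
      case 0
      show ?case
      proof (intro allI impI)
        fix k and A :: "'a mat"
        assume d: "n - k = 0" and k1: "1 \<le> k" and kn: "k \<le> n" and A: "A \<in> carrier_mat n n" and c: "cond_k n k A"
        have IHk: "\<And>B::'a mat. B \<in> carrier_mat (n - k) (n - k) \<Longrightarrow> NC (n - k) B"
          by (rule less.hyps, insert k1 False, auto)
        show "NC n A"
          by (rule blk_case[OF H2 c2 A k1 kn c _ IHk], insert d kn, auto)
      qed
    next
      case (Suc d)
      show ?case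
      proof (intro allI impI)
        fix k and A :: "'a mat"
        assume d: "n - k = Suc d" and k1: "1 \<le> k" and kn: "k \<le> n" and A: "A \<in> carrier_mat n n" and c: "cond_k n k A"
        show "NC n A"
        proof (cases "\<exists>i. k \<le> i \<and> i < n \<and> (A *\<^sub>v unit_vec n (k - 1)) $ i \<noteq> 0")
          case True
          then obtain i0 where i0: "k \<le> i0" "i0 < n" "(A *\<^sub>v unit_vec n (k - 1)) $ i0 \<noteq> 0" by blast
          have kn': "k < n" using d by auto
          obtain A' :: "'a mat" where A': "A' \<in> carrier_mat n n" and c': "cond_k n (Suc k) A'" and imp: "NC n A' \<longrightarrow> NC n A"
            using adv_case[OF H2 c2 A k1 kn' c i0] by blast
          have "n - Suc k = d" "1 \<le> Suc k" "Suc k \<le> n" using d kn' by auto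
          hence "NC n A'" using Suc.hyps[rule_format, of "Suc k" A'] A' c' by blast
          thus ?thesis using imp by simp
        next
          case False
          have IHk: "\<And>B::'a mat. B \<in> carrier_mat (n - k) (n - k) \<Longrightarrow> NC (n - k) B"
            by (rule less.hyps, insert k1 \<open>n \<noteq> 0\<close>, auto)
          show ?thesis
            by (rule blk_case[OF H2 c2 A k1 kn c _ IHk], insert False, auto)
        qed
      qed
    qed
    have c1: "cond_k n 1 A" unfolding cond_k_def by simp
    have "n - 1 = n - 1" "1 \<le> (1::nat)" "1 \<le> n" using False by auto
    thus ?thesis using key[of "n - 1", rule_format, of 1 A] less.prems c1 by blast
  qed
qed

lemma F2_GWNC:
  assumes H2: "\<forall>x::'a::ring_1. x = 0 \<or> x = 1" and c2: "(1::'a) + 1 = 0"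
  shows "GWNC (ring_mat TYPE('a) n ())"
  unfolding GWNC_iff
proof (intro ballI impI)
  fix A :: "'a mat" assume A: "A \<in> carrier_mat n n"
  obtain e q where ec: "e \<in> carrier_mat n n" and qc: "q \<in> carrier_mat n n" and ee: "e * e = e"
    and nq: "nilp n q" and Aeq: "A = e + q" using F2_NC[OF H2 c2 A] unfolding NC_def by blast
  have "A = q + e" using Aeq comm_add_mat[OF ec qc] by simp
  thus "\<exists>q e. q \<in> carrier_mat n n \<and> e \<in> carrier_mat n n \<and> nilp n q \<and> e * e = e \<and> (A = q + e \<or> A = q - e)"
    using ec qc ee nq by blast
qed

theorem lemma2p34:
  fixes n :: nat
  assumes "n \<ge> 2"
  shows "GWNC (ring_mat TYPE('a::division_ring) n ()) \<longleftrightarrow>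
           ((\<exists>f :: 'a \<Rightarrow> 2. ring_iso_ty f) \<or>
            ((\<exists>f :: 'a \<Rightarrow> 3. ring_iso_ty f) \<and> n = 2))"
proof
  assume G: "GWNC (ring_mat TYPE('a) n ())"
  show "(\<exists>f :: 'a \<Rightarrow> 2. ring_iso_ty f) \<or> ((\<exists>f :: 'a \<Rightarrow> 3. ring_iso_ty f) \<and> n = 2)"
  proof (cases "\<exists>a::'a. a \<noteq> 0 \<and> a \<noteq> 1 \<and> a \<noteq> -1")
    case True
    then obtain a :: 'a where a: "a \<noteq> 0" "a \<noteq> 1" "a \<noteq> -1" by blast
    have "\<not> GWNC (ring_mat TYPE('a) n ())" by (rule notGWNC_scalar[OF assms a])
    thus ?thesis using G by simp
  next
    case False
    hence H3: "\<forall>x::'a. x = 0 \<or> x = 1 \<or> x = -1" by blast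
    show ?thesis
    proof (cases "(1::'a) = -1")
      case True
      have H2: "\<forall>x::'a. x = 0 \<or> x = 1" using H3 True by metis
      have c2: "(1::'a) + 1 = 0" using True by (metis add.right_inverse)
      show ?thesis using mk_iso2[OF H2 c2] by blast
    next
      case False
      have iso: "\<exists>f :: 'a \<Rightarrow> 3. ring_iso_ty f" by (rule mk_iso3[OF H3 False])
      show ?thesis
      proof (cases "n = 2")
        case True thus ?thesis using iso by blast
      next
        case False
        hence "n \<ge> 3" using assms by simp
        hence "\<not> GWNC (ring_mat TYPE('a) n ())" by (rule notGWNC_F3[OF H3 \<open>(1::'a) \<noteq> -1\<close>])
        thus ?thesis using G by simp
      qed
    qed
  qed
next
  assume "(\<exists>f :: 'a \<Rightarrow> 2. ring_iso_ty f) \<or> ((\<exists>f :: 'a \<Rightarrow> 3. ring_iso_ty f) \<and> n = 2)"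
  thus "GWNC (ring_mat TYPE('a) n ())"
  proof
    assume "\<exists>f :: 'a \<Rightarrow> 2. ring_iso_ty f"
    then obtain f :: "'a \<Rightarrow> 2" where f: "ring_iso_ty f" by blast
    show ?thesis by (rule F2_GWNC[OF iso2_facts[OF f]])
  next
    assume "(\<exists>f :: 'a \<Rightarrow> 3. ring_iso_ty f) \<and> n = 2"
    then obtain f :: "'a \<Rightarrow> 3" where f: "ring_iso_ty f" and n2: "n = 2" by blast
    show ?thesis unfolding n2 by (rule F3_n2[OF iso3_facts[OF f]])
  qed
qed

end
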